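(* Let $(K_d)_{d\in\mathbb N}$ be a sequence of symmetric, isotropic convex bodies $K_d\subseteq\mathbb R^d$ that satisfy a uniform $\psi_2$-estimate, and assume \[ \limsup_{d\to\infty}\, \frac{\mathrm{rad}(K_d)}{\sqrt{d}\,L_{K_d}} \,<\, 2. \] Let $(A_d)_{d\in\mathbb N}$, $(B_d)_{d\in\mathbb N}$ be positive numbers. Then the curse of dimensionality holds for the classes $\mathscr C^1_d(A_d,B_d,K_d)$ if \[ \limsup_{d\to\infty}\; \min\left\{ A_{d} \, \sqrt{d} \,L_{K_d},\; B_{d} \, d \,L_{K_d}^2\right\} \,>\, 0. \]
   Context: A convex body $K\subseteq\mathbb R^d$ is a compact convex set with non-empty interior; it is symmetric if $-x\in K$ whenever $x\in K$, and then $\mathrm{rad}(K)=\sup_{y\in K}\|y\|_2$. $K$ is isotropic if $\mathrm{vol}_d(K)=1$, $\int_K x\,dx=0$, and there is $L_K\in(0,\infty)$ (the isotropic constant) with $\int_K\langle x,\theta\rangle^2\,dx=L_K^2$ for all $\theta\in\mathbb S^{d-1}$. For $\alpha\in[1,2]$ and a probability measure $\mu$, $\|f\|_{\psi_\alpha(\mu)}=\inf\{\lambda>0:\int e^{|f/\lambda|^\alpha}d\mu\le 2\}$. The sequence $(K_d)$ satisfies a uniform $\psi_\alpha$-estimate if there is a constant $b_\alpha\in(0,\infty)$ independent of $d$ such that for all $d$ and all $\theta\in\mathbb S^{d-1}$, $\|\langle\cdot,\theta\rangle\|_{\psi_\alpha(\mu_d)}\le b_\alpha(\int_{K_d}\langle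 x,\theta\rangle^2dx)^{1/2}$, where $\mu_d$ is the uniform (Lebesgue) probability measure on $K_d$. For $g$ defined on $K_d$, $\mathrm{Lip}(g)=\sup_{x\ne y\in K_d}|g(x)-g(y)|/\|x-y\|_2$, and $D^\theta$ denotes the directional derivative in direction $\theta$. For $A,B>0$, $\mathscr C^1_d(A,B,K_d)=\{f\in\mathscr C^1(K_d): \|f\|_\infty\le1,\ \mathrm{Lip}(f)\le A,\ \mathrm{Lip}(D^\theta f)\le B \text{ for all }\theta\in\mathbb S^{d-1}\}$. Integration problem: approximate $S_d(f)=\int_{K_d}f(x)\,dx$ for $f\in\mathscr F_d$ by algorithms $A_{n,d}(f)=\phi_{n,d}(f(x_1),\dots,f(x_n))$, where $\phi_{n,d}:\mathbb R^n\to\mathbb R$ is arbitrary and the points $x_j\in K_d$ may be chosen adaptively (depending on $f(x_1),\dots,f(x_{j-1})$). The worst-case error is $e(A_{n,d})=\sup_{f\in\mathscr F_d}|S_d(f)-A_{n,d}(f)|$, and the information complexity $n(\varepsilon,\mathscr F_d)$ is the minimal $n$ for which some such algorithm has $e(A_{n,d})\le\varepsilon$. The curse of dimensionality holds for $(\mathscr F_d)$ if there are $c,\varepsilon_0,\gamma>0$ with $n(\varepsilon,\mathscr F_d)\ge c(1+\gamma)^d$ for all $\varepsilon\le\varepsilon_0$ and infinitely many $d\in\mathbb N$. *)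

theory Defs
  imports "HOL-Analysis.Analysis"
begin

text \<open>Points of R^d are represented as extensional functions nat => real on {..<d}.\<close>

definition dvec :: "nat \<Rightarrow> (nat \<Rightarrow> real) set" where
  "dvec d = PiE {..<d} (\<lambda>_. UNIV)"

definition ip :: "nat \<Rightarrow> (nat \<Rightarrow> real) \<Rightarrow> (nat \<Rightarrow> real) \<Rightarrow> real" where
  "ip d x y = (\<Sum>i<d. x i * y i)"

definition nrm :: "nat \<Rightarrow> (nat \<Rightarrow> real) \<Rightarrow> real" where
  "nrm d x = sqrt (ip d x x)"

definition dst :: "nat \<Rightarrow> (nat \<Rightarrow> real) \<Rightarrow> (nat \<Rightarrow> real) \<Rightarrow> real" where
  "dst d x y = nrm d (\<lambda>i. x i - y i)"

definition sphere_d :: "nat \<Rightarrow> (nat \<Rightarrow> real) set" where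
  "sphere_d d = {\<theta> \<in> dvec d. nrm d \<theta> = 1}"

definition leb :: "nat \<Rightarrow> (nat \<Rightarrow> real) measure" where
  "leb d = PiM {..<d} (\<lambda>_. lborel)"

definition integ :: "nat \<Rightarrow> (nat \<Rightarrow> real) set \<Rightarrow> ((nat \<Rightarrow> real) \<Rightarrow> real) \<Rightarrow> real" where
  "integ d K f = set_lebesgue_integral (leb d) K f"

definition is_interior_pt :: "nat \<Rightarrow> (nat \<Rightarrow> real) set \<Rightarrow> (nat \<Rightarrow> real) \<Rightarrow> bool" where
  "is_interior_pt d K x \<longleftrightarrow> (\<exists>r>0. {y \<in> dvec d. dst d x y < r} \<subseteq> K)"

definition convex_body :: "nat \<Rightarrow> (nat \<Rightarrow> real) set \<Rightarrow> bool" where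
  "convex_body d K \<longleftrightarrow> K \<subseteq> dvec d \<and> compact K
     \<and> (\<forall>x\<in>K. \<forall>y\<in>K. \<forall>t\<in>{0..1}. restrict (\<lambda>i. (1 - t) * x i + t * y i) {..<d} \<in> K)
     \<and> (\<exists>x\<in>K. is_interior_pt d K x)"

definition symmetric_body :: "nat \<Rightarrow> (nat \<Rightarrow> real) set \<Rightarrow> bool" where
  "symmetric_body d K \<longleftrightarrow> (\<forall>x\<in>K. restrict (\<lambda>i. - x i) {..<d} \<in> K)"

definition rad :: "nat \<Rightarrow> (nat \<Rightarrow> real) set \<Rightarrow> real" where
  "rad d K = (SUP y\<in>K. nrm d y)"

definition isotropic :: "nat \<Rightarrow> (nat \<Rightarrow> real) set \<Rightarrow> bool" where
  "isotropic d K \<longleftrightarrow> emeasure (leb d) K = 1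
     \<and> (\<forall>i<d. integ d K (\<lambda>x. x i) = 0)
     \<and> (\<exists>L>0. \<forall>\<theta>\<in>sphere_d d. integ d K (\<lambda>x. (ip d x \<theta>)\<^sup>2) = L\<^sup>2)"

definition iso_const :: "nat \<Rightarrow> (nat \<Rightarrow> real) set \<Rightarrow> real" where
  "iso_const d K = (THE L. L > 0 \<and> (\<forall>\<theta>\<in>sphere_d d. integ d K (\<lambda>x. (ip d x \<theta>)\<^sup>2) = L\<^sup>2))"

text \<open>Orlicz psi_alpha norm (infimum of the empty set is +infinity).\<close>
definition psi_norm :: "real \<Rightarrow> 'a measure \<Rightarrow> ('a \<Rightarrow> real) \<Rightarrow> ereal" where
  "psi_norm \<alpha> \<mu> f = Inf {ereal s | s. s > 0 \<and>
      (\<integral>\<^sup>+ x. ennreal (exp (\<bar>f x / s\<bar> powr \<alpha>)) \<partial>\<mu>) \<le> 2}"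

definition uniform_psi_estimate :: "real \<Rightarrow> (nat \<Rightarrow> (nat \<Rightarrow> real) set) \<Rightarrow> bool" where
  "uniform_psi_estimate \<alpha> Ks \<longleftrightarrow> (\<exists>b>0. \<forall>d. \<forall>\<theta>\<in>sphere_d d.
      psi_norm \<alpha> (uniform_measure (leb d) (Ks d)) (\<lambda>x. ip d x \<theta>)
        \<le> ereal (b * sqrt (integ d (Ks d) (\<lambda>x. (ip d x \<theta>)\<^sup>2))))"

definition is_C1 :: "nat \<Rightarrow> (nat \<Rightarrow> real) set \<Rightarrow> ((nat \<Rightarrow> real) \<Rightarrow> real)
    \<Rightarrow> ((nat \<Rightarrow> real) \<Rightarrow> nat \<Rightarrow> real) \<Rightarrow> bool" where
  "is_C1 d K f g \<longleftrightarrow> continuous_on K f \<and> (\<forall>i<d. continuous_on K (\<lambda>x. g x i))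
     \<and> (\<forall>x\<in>K. is_interior_pt d K x \<longrightarrow>
          (\<forall>i<d. ((\<lambda>t. f (x(i := x i + t))) has_real_derivative g x i) (at 0)))"

definition dir_deriv :: "nat \<Rightarrow> ((nat \<Rightarrow> real) \<Rightarrow> nat \<Rightarrow> real) \<Rightarrow> (nat \<Rightarrow> real)
    \<Rightarrow> (nat \<Rightarrow> real) \<Rightarrow> real" where
  "dir_deriv d g \<theta> x = (\<Sum>i<d. \<theta> i * g x i)"

definition C1_class :: "nat \<Rightarrow> real \<Rightarrow> real \<Rightarrow> (nat \<Rightarrow> real) set
    \<Rightarrow> ((nat \<Rightarrow> real) \<Rightarrow> real) set" where
  "C1_class d A B K = {f. \<exists>g. is_C1 d K f g
     \<and> (\<forall>x\<in>K. \<bar>f x\<bar> \<le> 1)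
     \<and> (\<forall>x\<in>K. \<forall>y\<in>K. \<bar>f x - f y\<bar> \<le> A * dst d x y)
     \<and> (\<forall>\<theta>\<in>sphere_d d. \<forall>x\<in>K. \<forall>y\<in>K.
          \<bar>dir_deriv d g \<theta> x - dir_deriv d g \<theta> y\<bar> \<le> B * dst d x y)}"

text \<open>Adaptive information: the j-th point P j ys depends on the previous values ys.\<close>
fun adapt_info :: "(nat \<Rightarrow> real list \<Rightarrow> 'a) \<Rightarrow> ('a \<Rightarrow> real) \<Rightarrow> nat \<Rightarrow> real list" where
  "adapt_info P f 0 = []"
| "adapt_info P f (Suc j) = (let ys = adapt_info P f j in ys @ [f (P j ys)])"

definition info_complexity :: "nat \<Rightarrow> (nat \<Rightarrow> real) set \<Rightarrow> ((nat \<Rightarrow> real) \<Rightarrow> real) set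
    \<Rightarrow> real \<Rightarrow> ereal" where
  "info_complexity d K F \<epsilon> = Inf {ereal (real n) | n. \<exists>P \<phi>.
      (\<forall>j ys. P j ys \<in> K) \<and>
      (SUP f\<in>F. ereal \<bar>integ d K f - \<phi> (adapt_info P f n)\<bar>) \<le> ereal \<epsilon>}"

definition curse :: "(nat \<Rightarrow> ((nat \<Rightarrow> real) \<Rightarrow> real) set) \<Rightarrow> (nat \<Rightarrow> (nat \<Rightarrow> real) set) \<Rightarrow> bool" where
  "curse F Ks \<longleftrightarrow> (\<exists>c>0. \<exists>\<epsilon>0>0. \<exists>\<gamma>>0. \<exists>\<^sub>\<infinity> d. \<forall>\<epsilon>. \<epsilon> \<le> \<epsilon>0 \<longrightarrow>
      info_complexity d (Ks d) (F d) \<epsilon> \<ge> ereal (c * (1 + \<gamma>) ^ d))"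

end

theory Submission
  imports Defs
begin


definition comb :: "nat \<Rightarrow> (nat \<Rightarrow> nat \<Rightarrow> real) \<Rightarrow> (nat \<Rightarrow> real) \<Rightarrow> nat \<Rightarrow> real" where
  "comb m p l = (\<lambda>k. \<Sum>i<m. l i * p i k)"
definition splx :: "nat \<Rightarrow> (nat \<Rightarrow> real) set" where
  "splx m = {l. (\<forall>i<m. 0 \<le> l i) \<and> (\<forall>i. m \<le> i \<longrightarrow> l i = 0) \<and> (\<Sum>i<m. l i) = 1}"
definition sqd :: "nat \<Rightarrow> (nat \<Rightarrow> real) \<Rightarrow> (nat \<Rightarrow> real) \<Rightarrow> real" where
  "sqd d x y = (\<Sum>k<d. (x k - y k)\<^sup>2)"

lemma splx_compact: "compact (splx m)"
proof -
  define S where "S = (\<lambda>i::nat. if i < m then {0..1::real} else {0})"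
  have c: "compact (PiE UNIV S)"
    unfolding compactin_euclidean_iff[symmetric] euclidean_product_topology[symmetric]
    by (subst compactin_PiE) (auto simp: S_def)
  have sub: "splx m \<subseteq> PiE UNIV S"
  proof
    fix l assume l: "l \<in> splx m"
    have "l i \<le> 1" if "i < m" for i
    proof -
      have "l i \<le> (\<Sum>j<m. l j)"
        using l that by (intro member_le_sum) (auto simp: splx_def)
      thus ?thesis using l by (simp add: splx_def)
    qed
    thus "l \<in> PiE UNIV S" using l by (auto simp: splx_def S_def PiE_def extensional_def)
  qed
  have cl: "closed (splx m)"
  proof -
    have "splx m = (\<Inter>i\<in>{..<m}. {l. 0 \<le> l i}) \<inter> (\<Inter>i\<in>{m..}. {l. l i = 0}) \<inter> {l. (\<Sum>i<m. l i) = 1}"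
      by (auto simp: splx_def)
    also have "closed \<dots>"
      by (intro closed_Int closed_INT ballI closed_Collect_le closed_Collect_eq continuous_on_sum
          continuous_on_product_coordinates continuous_on_const)
    finally show ?thesis .
  qed
  show ?thesis using compact_Int_closed[OF c cl] sub by (simp add: Int_absorb1)
qed


definition lam :: "nat \<Rightarrow> nat \<Rightarrow> (nat \<Rightarrow> nat \<Rightarrow> real) \<Rightarrow> (nat \<Rightarrow> real) \<Rightarrow> (nat \<Rightarrow> real)" where
  "lam d m p y = (SOME l. l \<in> splx m \<and> (\<forall>l'\<in>splx m. sqd d y (comb m p l) \<le> sqd d y (comb m p l')))"
definition prj :: "nat \<Rightarrow> nat \<Rightarrow> (nat \<Rightarrow> nat \<Rightarrow> real) \<Rightarrow> (nat \<Rightarrow> real) \<Rightarrow> (nat \<Rightarrow> real)" where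
  "prj d m p y = comb m p (lam d m p y)"
definition phi :: "nat \<Rightarrow> nat \<Rightarrow> (nat \<Rightarrow> nat \<Rightarrow> real) \<Rightarrow> (nat \<Rightarrow> real) \<Rightarrow> real" where
  "phi d m p y = sqd d y (prj d m p y)"

lemma splx_nonempty: "0 < m \<Longrightarrow> (\<lambda>i. if i = 0 then 1 else 0) \<in> splx m"
  by (auto simp: splx_def)

lemma lam_spec:
  assumes "0 < m"
  shows "lam d m p y \<in> splx m \<and> (\<forall>l'\<in>splx m. phi d m p y \<le> sqd d y (comb m p l'))"
proof -
  have "\<exists>l\<in>splx m. \<forall>l'\<in>splx m. sqd d y (comb m p l) \<le> sqd d y (comb m p l')"
  proof (rule continuous_attains_inf[OF splx_compact])
    show "splx m \<noteq> {}" using splx_nonempty[OF assms] by blast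
    show "continuous_on (splx m) (\<lambda>l. sqd d y (comb m p l))"
      unfolding sqd_def comb_def
      by (intro continuous_intros continuous_on_product_coordinates[THEN continuous_on_subset]) auto
  qed
  then have "\<exists>l. l \<in> splx m \<and> (\<forall>l'\<in>splx m. sqd d y (comb m p l) \<le> sqd d y (comb m p l'))" by blast
  from someI_ex[OF this] show ?thesis unfolding phi_def prj_def lam_def by blast
qed

lemma splx_convex:
  assumes "l \<in> splx m" "l' \<in> splx m" "0 \<le> t" "t \<le> 1"
  shows "(\<lambda>i. (1 - t) * l i + t * l' i) \<in> splx m"
  using assms by (auto simp: splx_def sum.distrib sum_distrib_left[symmetric])

lemma comb_convex:
  "comb m p (\<lambda>i. (1 - t) * l i + t * l' i) = (\<lambda>k. comb m p l k + t * (comb m p l' k - comb m p l k))"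
  by (auto simp: comb_def algebra_simps sum.distrib sum_distrib_left sum_subtractf)

lemma sqd_expand:
  "sqd d y (\<lambda>k. z k + t * (w k - z k)) = sqd d y z - 2 * t * (\<Sum>k<d. (y k - z k) * (w k - z k)) + t\<^sup>2 * sqd d w z"
  unfolding sqd_def
  by (simp add: power2_eq_square algebra_simps sum.distrib sum_distrib_left sum_subtractf)

lemma prj_VI:
  assumes "0 < m" "l' \<in> splx m"
  shows "(\<Sum>k<d. (y k - prj d m p y k) * (comb m p l' k - prj d m p y k)) \<le> 0"
proof (rule ccontr)
  define z where "z = prj d m p y"
  define w where "w = comb m p l'"
  define V where "V = (\<Sum>k<d. (y k - z k) * (w k - z k))"
  define W where "W = sqd d w z"
  assume "\<not> ?thesis"
  hence V: "V > 0" by (simp add: V_def z_def w_def)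
  have W0: "W \<ge> 0" unfolding W_def sqd_def by (intro sum_nonneg) auto
  have key: "2 * V \<le> t * W" if t: "0 < t" "t \<le> 1" for t
  proof -
    have sp: "lam d m p y \<in> splx m" using lam_spec[OF assms(1)] by blast
    have "phi d m p y \<le> sqd d y (comb m p (\<lambda>i. (1 - t) * lam d m p y i + t * l' i))"
      using lam_spec[OF assms(1)] splx_convex[OF sp assms(2), of t] t by auto
    also have "\<dots> = sqd d y z - 2 * t * V + t\<^sup>2 * W"
      unfolding comb_convex z_def V_def W_def w_def prj_def[symmetric] using sqd_expand by simp
    finally have "0 \<le> - 2 * t * V + t\<^sup>2 * W" by (simp add: phi_def z_def)
    hence "0 \<le> t * (t * W - 2 * V)" by (simp add: power2_eq_square algebra_simps)
    thus ?thesis using t by (simp add: zero_le_mult_iff)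
  qed
  show False
  proof (cases "W = 0")
    case True thus False using key[of 1] V by simp
  next
    case False
    hence Wp: "W > 0" using W0 by simp
    define t where "t = min 1 (V / W)"
    have "0 < t" "t \<le> 1" using V Wp by (auto simp: t_def)
    from key[OF this] have "2 * V \<le> t * W" .
    also have "\<dots> \<le> (V / W) * W" using Wp by (intro mult_right_mono) (auto simp: t_def)
    also have "\<dots> = V" using Wp by simp
    finally show False using V by simp
  qed
qed


lemma cs_sum: "\<bar>\<Sum>k\<in>A. u k * v k\<bar> \<le> sqrt (\<Sum>k\<in>A. (u k)\<^sup>2) * sqrt (\<Sum>k\<in>A. (v k)\<^sup>2)"
proof -
  have "\<bar>\<Sum>k\<in>A. u k * v k\<bar> \<le> (\<Sum>k\<in>A. \<bar>u k\<bar> * \<bar>v k\<bar>)"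
    by (rule order_trans[OF sum_abs]) (simp add: abs_mult)
  also have "\<dots> \<le> L2_set u A * L2_set v A" by (rule L2_set_mult_ineq)
  finally show ?thesis by (simp add: L2_set_def)
qed

lemma tri_sum: "sqrt (\<Sum>k\<in>A. (u k + v k)\<^sup>2) \<le> sqrt (\<Sum>k\<in>A. (u k)\<^sup>2) + sqrt (\<Sum>k\<in>A. (v k)\<^sup>2)"
  using L2_set_triangle_ineq[of u v A] by (simp add: L2_set_def)

lemma sqd_nonneg: "0 \<le> sqd d x y" unfolding sqd_def by (intro sum_nonneg) auto

lemma phi_nonneg: "0 \<le> phi d m p y" unfolding phi_def by (rule sqd_nonneg)

lemma phi_le: "0 < m \<Longrightarrow> l \<in> splx m \<Longrightarrow> phi d m p y \<le> sqd d y (comb m p l)"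
  using lam_spec by blast

lemma phi_point:
  assumes "j < m" shows "phi d m p (p j) = 0"
proof -
  define l where "l = (\<lambda>i. if i = j then 1 else (0::real))"
  have l: "l \<in> splx m" using assms by (auto simp: splx_def l_def)
  have "comb m p l k = p j k" for k
  proof -
    have "comb m p l k = (\<Sum>i<m. if i = j then p i k else 0)"
      unfolding comb_def l_def by (intro sum.cong) auto
    thus ?thesis using assms by simp
  qed
  hence "comb m p l = p j" by auto
  hence "phi d m p (p j) \<le> 0" using phi_le[OF _ l, where d=d and p=p and y="p j"] assms by (simp add: sqd_def)
  thus ?thesis using phi_nonneg[of d m p "p j"] by simp
qed

lemma sum_sq_expand: "(\<Sum>k\<in>A. ((u::nat\<Rightarrow>real) k + v k)\<^sup>2) = (\<Sum>k\<in>A. (u k)\<^sup>2) + 2 * (\<Sum>k\<in>A. u k * v k) + (\<Sum>k\<in>A. (v k)\<^sup>2)"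
  by (simp add: power2_sum sum.distrib sum_distrib_left mult.assoc)

lemma sum_sq_expand2: "(\<Sum>k\<in>A. ((u::nat\<Rightarrow>real) k - v k)\<^sup>2) = (\<Sum>k\<in>A. (u k)\<^sup>2) - 2 * (\<Sum>k\<in>A. u k * v k) + (\<Sum>k\<in>A. (v k)\<^sup>2)"
  by (simp add: power2_diff sum.distrib sum_subtractf sum_distrib_left mult.assoc)

lemma prj_firm:
  assumes "0 < m"
  shows "(\<Sum>k<d. ((y' k - prj d m p y' k) - (y k - prj d m p y k))\<^sup>2) \<le> sqd d y' y"
proof -
  define a where "a = prj d m p y"
  define b where "b = prj d m p y'"
  have la: "lam d m p y \<in> splx m" and lb: "lam d m p y' \<in> splx m" using lam_spec[OF assms] by blast+
  have v1: "(\<Sum>k<d. (y k - a k) * (b k - a k)) \<le> 0"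
    using prj_VI[OF assms lb, where d=d and p=p and y=y] by (simp add: a_def b_def prj_def)
  have v2: "(\<Sum>k<d. (y' k - b k) * (a k - b k)) \<le> 0"
    using prj_VI[OF assms la, where d=d and p=p and y=y'] by (simp add: a_def b_def prj_def)
  have e1: "(\<Sum>k<d. (y k - a k) * (b k - a k)) + (\<Sum>k<d. (y' k - b k) * (a k - b k))
      = (\<Sum>k<d. (b k - a k)\<^sup>2) - (\<Sum>k<d. (y' k - y k) * (b k - a k))"
  proof -
    have "(\<Sum>k<d. (y k - a k) * (b k - a k)) + (\<Sum>k<d. (y' k - b k) * (a k - b k))
       = (\<Sum>k<d. (y k - a k) * (b k - a k) + (y' k - b k) * (a k - b k))" by (simp add: sum.distrib)
    also have "\<dots> = (\<Sum>k<d. (b k - a k)\<^sup>2 - (y' k - y k) * (b k - a k))"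
      by (intro sum.cong) (auto simp: algebra_simps power2_eq_square)
    also have "\<dots> = (\<Sum>k<d. (b k - a k)\<^sup>2) - (\<Sum>k<d. (y' k - y k) * (b k - a k))" by (simp add: sum_subtractf)
    finally show ?thesis .
  qed
  have e2: "(\<Sum>k<d. ((y' k - b k) - (y k - a k))\<^sup>2) = sqd d y' y - 2 * (\<Sum>k<d. (y' k - y k) * (b k - a k)) + (\<Sum>k<d. (b k - a k)\<^sup>2)"
    using sum_sq_expand2[of "\<lambda>k. y' k - y k" "\<lambda>k. b k - a k" "{..<d}"] unfolding sqd_def
    by (simp add: algebra_simps)
  have "(\<Sum>k<d. (b k - a k)\<^sup>2) \<ge> 0" by (intro sum_nonneg) auto
  thus ?thesis using v1 v2 e1 e2 by (simp add: a_def b_def)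
qed

lemma phi_second:
  assumes "0 < m"
  shows "\<bar>phi d m p y' - phi d m p y - 2 * (\<Sum>k<d. (y' k - y k) * (y k - prj d m p y k))\<bar> \<le> 3 * sqd d y' y"
proof -
  define a where "a = prj d m p y"
  define b where "b = prj d m p y'"
  define S1 where "S1 = sqd d y' y"
  have la: "lam d m p y \<in> splx m" and lb: "lam d m p y' \<in> splx m" using lam_spec[OF assms] by blast+
  have up: "phi d m p y' \<le> sqd d y' a"
    using phi_le[OF assms la, where d=d and p=p and y=y'] by (simp add: a_def prj_def)
  have up2: "sqd d y' a = S1 + 2 * (\<Sum>k<d. (y' k - y k) * (y k - a k)) + phi d m p y"
    using sum_sq_expand[of "\<lambda>k. y' k - y k" "\<lambda>k. y k - a k" "{..<d}"]
    by (simp add: S1_def a_def phi_def sqd_def)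
  have lo: "phi d m p y \<le> sqd d y b"
    using phi_le[OF assms lb, where d=d and p=p and y=y] by (simp add: b_def prj_def)
  have lo2: "sqd d y b = S1 - 2 * (\<Sum>k<d. (y' k - y k) * (y' k - b k)) + phi d m p y'"
    using sum_sq_expand2[of "\<lambda>k. y' k - b k" "\<lambda>k. y' k - y k" "{..<d}"] sqd_def[of d y' y]
    by (simp add: S1_def b_def phi_def sqd_def mult.commute add.commute)
  have split: "(\<Sum>k<d. (y' k - y k) * (y' k - b k)) = (\<Sum>k<d. (y' k - y k) * (y k - a k)) + (\<Sum>k<d. (y' k - y k) * ((y' k - b k) - (y k - a k)))"
  proof -
    have "(\<Sum>k<d. (y' k - y k) * (y' k - b k)) = (\<Sum>k<d. (y' k - y k) * (y k - a k) + (y' k - y k) * ((y' k - b k) - (y k - a k)))"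
      by (intro sum.cong) (auto simp: algebra_simps)
    thus ?thesis by (simp add: sum.distrib)
  qed
  have Q: "(\<Sum>k<d. ((y' k - b k) - (y k - a k))\<^sup>2) \<le> S1"
    using prj_firm[OF assms, where y'=y' and d=d and p=p and y=y] by (simp add: a_def b_def S1_def)
  have "\<bar>\<Sum>k<d. (y' k - y k) * ((y' k - b k) - (y k - a k))\<bar> \<le> sqrt S1 * sqrt (\<Sum>k<d. ((y' k - b k) - (y k - a k))\<^sup>2)"
    using cs_sum[of "\<lambda>k. y' k - y k" "\<lambda>k. (y' k - b k) - (y k - a k)" "{..<d}"] by (simp add: S1_def sqd_def)
  also have "\<dots> \<le> sqrt S1 * sqrt S1" using Q sqd_nonneg[of d y' y] by (intro mult_left_mono) (auto simp: S1_def)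
  also have "\<dots> = S1" using sqd_nonneg[of d y' y] by (simp add: S1_def)
  finally have cs: "\<bar>\<Sum>k<d. (y' k - y k) * ((y' k - b k) - (y k - a k))\<bar> \<le> S1" .
  have "S1 \<ge> 0" using sqd_nonneg by (simp add: S1_def)
  thus ?thesis using up up2 lo lo2 split cs by (simp add: a_def S1_def abs_le_iff)
qed

lemma sqrt_phi_lip:
  assumes "0 < m"
  shows "sqrt (phi d m p y') \<le> sqrt (phi d m p y) + sqrt (sqd d y' y)"
proof -
  define a where "a = prj d m p y"
  have la: "lam d m p y \<in> splx m" using lam_spec[OF assms] by blast
  have "phi d m p y' \<le> sqd d y' a"
    using phi_le[OF assms la, where d=d and p=p and y=y'] by (simp add: a_def prj_def)
  hence "sqrt (phi d m p y') \<le> sqrt (\<Sum>k<d. ((y' k - y k) + (y k - a k))\<^sup>2)" by (simp add: sqd_def)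
  also have "\<dots> \<le> sqrt (sqd d y' y) + sqrt (phi d m p y)"
    using tri_sum[of "\<lambda>k. y' k - y k" "\<lambda>k. y k - a k" "{..<d}"] by (simp add: sqd_def phi_def a_def)
  finally show ?thesis by simp
qed

lemma phi_lower:
  assumes "0 < m" and T: "\<forall>j<m. (\<Sum>k<d. y k * p j k) \<le> T" and Y: "2 * T \<le> (\<Sum>k<d. (y k)\<^sup>2)"
  shows "(\<Sum>k<d. (y k)\<^sup>2) / 4 \<le> phi d m p y"
proof -
  define Y where "Y = (\<Sum>k<d. (y k)\<^sup>2)"
  define l where "l = lam d m p y"
  define z where "z = prj d m p y"
  have l: "l \<in> splx m" using lam_spec[OF assms(1)] by (simp add: l_def)
  have "(\<Sum>k<d. y k * z k) = (\<Sum>i<m. l i * (\<Sum>k<d. y k * p i k))"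
    by (simp add: z_def prj_def l_def[symmetric] comb_def sum_distrib_left algebra_simps sum.swap[of _ "{..<d}"])
  also have "\<dots> \<le> (\<Sum>i<m. l i * T)"
    using l T by (intro sum_mono mult_left_mono) (auto simp: splx_def)
  also have "\<dots> = T" using l by (simp add: sum_distrib_right[symmetric] splx_def)
  finally have yz: "(\<Sum>k<d. y k * z k) \<le> T" .
  have "Y - T \<le> (\<Sum>k<d. y k * (y k - z k))"
    using yz by (simp add: Y_def power2_eq_square algebra_simps sum_subtractf)
  also have "\<dots> \<le> sqrt Y * sqrt (phi d m p y)"
    using cs_sum[of y "\<lambda>k. y k - z k" "{..<d}"] by (simp add: Y_def phi_def sqd_def z_def)
  finally have h: "Y / 2 \<le> sqrt Y * sqrt (phi d m p y)" using Y by (simp add: Y_def)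
  have Y0: "Y \<ge> 0" unfolding Y_def by (intro sum_nonneg) auto
  show ?thesis
  proof (cases "Y = 0")
    case True thus ?thesis using phi_nonneg by (simp add: Y_def)
  next
    case False
    hence "sqrt Y > 0" using Y0 by simp
    have "sqrt Y * sqrt Y / 2 \<le> sqrt Y * sqrt (phi d m p y)" using h Y0 by simp
    hence "sqrt Y * (sqrt Y / 2) \<le> sqrt Y * sqrt (phi d m p y)" by simp
    hence "sqrt Y / 2 \<le> sqrt (phi d m p y)" using \<open>sqrt Y > 0\<close> by (simp only: mult_le_cancel_left_pos)
    hence "(sqrt Y / 2)\<^sup>2 \<le> (sqrt (phi d m p y))\<^sup>2" using \<open>sqrt Y > 0\<close> by (intro power_mono) auto
    thus ?thesis using Y0 phi_nonneg[of d m p y] by (simp add: Y_def power_divide)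
  qed
qed



lemma isCont_coord: "isCont (\<lambda>y::nat \<Rightarrow> real. y k) x"
  using continuous_on_product_coordinates[of k] continuous_on_eq_continuous_at[of UNIV] by blast

lemma isCont_sqd: "isCont (\<lambda>y'. sqd d y' y) x"
  unfolding sqd_def by (intro continuous_intros isCont_coord)

lemma cont_from_bound:
  fixes F :: "(nat \<Rightarrow> real) \<Rightarrow> real"
  assumes "\<And>y y'. \<bar>F y' - F y\<bar> \<le> M * sqrt (sqd d y' y)"
  shows "continuous_on S F"
proof -
  have "isCont F y" for y
  proof -
    have lim: "((\<lambda>y'. M * sqrt (sqd d y' y)) \<longlongrightarrow> M * sqrt (sqd d y y)) (at y)"
      by (intro tendsto_intros isCont_tendsto_compose[OF isCont_sqd] tendsto_ident_at)
    have "sqd d y y = 0" by (simp add: sqd_def)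
    with lim have lim0: "((\<lambda>y'. M * sqrt (sqd d y' y)) \<longlongrightarrow> 0) (at y)" by simp
    have "((\<lambda>y'. F y' - F y) \<longlongrightarrow> 0) (at y)"
      by (rule Lim_null_comparison[OF _ lim0]) (use assms in auto)
    thus ?thesis unfolding isCont_def by (simp add: LIM_zero_iff)
  qed
  thus ?thesis by (simp add: continuous_at_imp_continuous_on)
qed

lemma deriv_from_quad:
  fixes F :: "real \<Rightarrow> real"
  assumes "\<And>t. \<bar>F t - F 0 - a * t\<bar> \<le> M * t\<^sup>2"
  shows "(F has_real_derivative a) (at 0)"
proof -
  have "((\<lambda>t. (F t - F 0) / t - a) \<longlongrightarrow> 0) (at 0)"
  proof (rule Lim_null_comparison)
    show "\<forall>\<^sub>F t in at 0. norm ((F t - F 0) / t - a) \<le> \<bar>M\<bar> * \<bar>t\<bar>"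
    proof (rule eventually_at_filter[THEN iffD2], rule always_eventually, intro allI impI)
      fix t :: real assume "t \<noteq> 0"
      hence "(F t - F 0) / t - a = (F t - F 0 - a * t) / t" by (simp add: field_simps)
      hence "norm ((F t - F 0) / t - a) = \<bar>F t - F 0 - a * t\<bar> / \<bar>t\<bar>" by (simp add: abs_divide)
      also have "\<dots> \<le> M * t\<^sup>2 / \<bar>t\<bar>" using assms[of t] by (intro divide_right_mono) auto
      also have "\<dots> = M * \<bar>t\<bar>"
      proof -
        have "t\<^sup>2 = \<bar>t\<bar> * \<bar>t\<bar>" by (simp add: power2_eq_square)
        thus ?thesis using \<open>t \<noteq> 0\<close> by (simp only:) (simp add: divide_simps)
      qed
      also have "\<dots> \<le> \<bar>M\<bar> * \<bar>t\<bar>" by (intro mult_right_mono) auto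
      finally show "norm ((F t - F 0) / t - a) \<le> \<bar>M\<bar> * \<bar>t\<bar>" .
    qed
    show "((\<lambda>t. \<bar>M\<bar> * \<bar>t\<bar>) \<longlongrightarrow> 0) (at 0)"
      by (rule tendsto_eq_intros) (auto intro!: tendsto_eq_intros)
  qed
  hence "((\<lambda>t. (F t - F 0) / (t - 0)) \<longlongrightarrow> a) (at 0)" by (simp add: LIM_zero_iff)
  thus ?thesis by (simp add: has_field_derivative_iff)
qed


lemma dst_sqd: "dst d x y = sqrt (sqd d x y)"
  by (simp add: dst_def nrm_def ip_def sqd_def power2_eq_square)

lemma sqd_commute: "sqd d x y = sqd d y x"
  unfolding sqd_def by (intro sum.cong) (auto simp: power2_commute)

lemma comb_unit:
  assumes "j < m" shows "comb m p (\<lambda>i. if i = j then 1 else 0) = p j"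
proof -
  have "comb m p (\<lambda>i. if i = j then 1 else 0) k = p j k" for k
  proof -
    have "comb m p (\<lambda>i. if i = j then 1 else 0) k = (\<Sum>i<m. if i = j then p i k else 0)"
      unfolding comb_def by (intro sum.cong) auto
    thus ?thesis using assms by simp
  qed
  thus ?thesis by auto
qed

lemma phi_le_norm:
  assumes "0 < m" "\<forall>k<d. p 0 k = 0"
  shows "phi d m p x \<le> (\<Sum>k<d. (x k)\<^sup>2)"
proof -
  have l: "(\<lambda>i. if i = 0 then 1 else 0) \<in> splx m" using assms by (auto simp: splx_def)
  have "phi d m p x \<le> sqd d x (p 0)" using phi_le[OF assms(1) l, where d=d and p=p and y=x]
    comb_unit[OF assms(1), of p] by simp
  also have "\<dots> = (\<Sum>k<d. (x k)\<^sup>2)" using assms(2) by (simp add: sqd_def)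
  finally show ?thesis .
qed

lemma sqrt_phi_diff:
  assumes "0 < m"
  shows "\<bar>sqrt (phi d m p x) - sqrt (phi d m p y)\<bar> \<le> sqrt (sqd d x y)"
  using sqrt_phi_lip[OF assms, of d p x y] sqrt_phi_lip[OF assms, of d p y x] unfolding sqd_commute[of d y x]
  by linarith

lemma upd_sqd: "i < d \<Longrightarrow> sqd d ((x::nat\<Rightarrow>real)(i := x i + t)) x = t\<^sup>2"
proof -
  assume i: "i < d"
  have "sqd d (x(i := x i + t)) x = (\<Sum>k<d. if k = i then t\<^sup>2 else 0)"
    unfolding sqd_def by (intro sum.cong) auto
  thus ?thesis using i by simp
qed

lemma upd_sum: "i < d \<Longrightarrow> (\<Sum>k<d. (((x::nat\<Rightarrow>real)(i := x i + t)) k - x k) * h k) = t * h i"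
proof -
  assume i: "i < d"
  have "(\<Sum>k<d. ((x(i := x i + t)) k - x k) * h k) = (\<Sum>k<d. if k = i then t * h i else 0)"
    by (intro sum.cong) auto
  thus ?thesis using i by simp
qed

lemma cont_phi:
  assumes m: "0 < m" shows "continuous_on S (phi d m p)"
proof -
  have "continuous_on S (\<lambda>y. sqrt (phi d m p y))"
    by (rule cont_from_bound[where M=1 and d=d]) (use sqrt_phi_diff[OF m] in auto)
  hence "continuous_on S (\<lambda>y. (sqrt (phi d m p y))\<^sup>2)"
    by (intro continuous_on_power)
  moreover have "(\<lambda>y. (sqrt (phi d m p y))\<^sup>2) = phi d m p" by (auto simp: phi_nonneg)
  ultimately show ?thesis by metis
qed

lemma fool_in_class:
  assumes m: "0 < m" and p0: "\<forall>k<d. p 0 k = 0" and c: "0 \<le> c"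
    and R: "\<forall>x\<in>K. (\<Sum>k<d. (x k)\<^sup>2) \<le> R\<^sup>2" "0 \<le> R"
    and cR: "c * R\<^sup>2 \<le> 1" and cA: "2 * c * R \<le> A" and cB: "2 * c \<le> B"
  shows "(\<lambda>y. c * phi d m p y) \<in> C1_class d A B K"
proof -
  define g where "g = (\<lambda>y i. 2 * c * (y i - prj d m p y i))"
  have contphi: "continuous_on K (\<lambda>y. c * phi d m p y)"
  proof -
    have "continuous_on K (\<lambda>y. sqrt (phi d m p y))"
      by (rule cont_from_bound[where M=1 and d=d]) (use sqrt_phi_diff[OF m] in auto)
    hence "continuous_on K (\<lambda>y. c * (sqrt (phi d m p y))\<^sup>2)"
      by (intro continuous_on_mult[OF continuous_on_const] continuous_on_power)
    moreover have "(\<lambda>y. c * (sqrt (phi d m p y))\<^sup>2) = (\<lambda>y. c * phi d m p y)" by (auto simp: phi_nonneg)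
    ultimately show ?thesis by metis
  qed
  have firm: "\<bar>(x i - prj d m p x i) - (y i - prj d m p y i)\<bar> \<le> sqrt (sqd d x y)" if "i < d" for x y i
  proof -
    have "((x i - prj d m p x i) - (y i - prj d m p y i))\<^sup>2
        \<le> (\<Sum>k<d. ((x k - prj d m p x k) - (y k - prj d m p y k))\<^sup>2)"
      using that by (intro member_le_sum) auto
    also have "\<dots> \<le> sqd d x y" by (rule prj_firm[OF m])
    finally show ?thesis by (simp add: real_le_rsqrt)
  qed
  have contg: "continuous_on K (\<lambda>x. g x i)" if "i < d" for i
    by (rule cont_from_bound[where M="2*c" and d=d])
       (use firm[OF that] c in \<open>auto simp: g_def abs_mult right_diff_distrib[symmetric] intro: mult_left_mono\<close>)
  have deriv: "((\<lambda>t. c * phi d m p (x(i := x i + t))) has_real_derivative g x i) (at 0)" if "i < d" for x i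
  proof (rule deriv_from_quad[where M="3*c"])
    fix t
    have "\<bar>phi d m p (x(i := x i + t)) - phi d m p x - 2 * (t * (x i - prj d m p x i))\<bar> \<le> 3 * t\<^sup>2"
    proof -
      have e: "(\<Sum>k<d. ((x(i := x i + t)) k - x k) * (x k - prj d m p x k)) = t * (x i - prj d m p x i)"
        by (rule upd_sum[OF that])
      show ?thesis using phi_second[OF m, where y'="x(i := x i + t)" and y=x and d=d and p=p]
        unfolding e upd_sqd[OF that] .
    qed
    hence "c * \<bar>phi d m p (x(i := x i + t)) - phi d m p x - 2 * (t * (x i - prj d m p x i))\<bar> \<le> c * (3 * t\<^sup>2)"
      using c by (intro mult_left_mono) auto
    moreover have eq: "c * phi d m p (x(i := x i + t)) - c * phi d m p x - g x i * t = c * (phi d m p (x(i := x i + t)) - phi d m p x - 2 * (t * (x i - prj d m p x i)))"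
      by (simp add: g_def algebra_simps)
    moreover have "x i + 0 + t = x i + t" "x(i := x i + 0) = x" by auto
    ultimately show "\<bar>c * phi d m p (x(i := x i + t)) - c * phi d m p (x(i := x i + 0)) - g x i * t\<bar> \<le> 3 * c * t\<^sup>2"
      using c by (simp only: abs_mult abs_of_nonneg)
  qed
  have bnd: "\<bar>c * phi d m p x\<bar> \<le> 1" if "x \<in> K" for x
  proof -
    have "phi d m p x \<le> R\<^sup>2" using phi_le_norm[where m=m and d=d and p=p and x=x, OF m p0] R that by fastforce
    hence "c * phi d m p x \<le> c * R\<^sup>2" using c by (intro mult_left_mono)
    thus ?thesis using cR c phi_nonneg[of d m p x] by simp
  qed
  have lip: "\<bar>c * phi d m p x - c * phi d m p y\<bar> \<le> A * dst d x y" if "x \<in> K" "y \<in> K" for x y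
  proof -
    have sx: "sqrt (phi d m p x) \<le> R"
    proof -
      have "phi d m p x \<le> R\<^sup>2" using phi_le_norm[where m=m and d=d and p=p and x=x, OF m p0] R that by fastforce
      hence "sqrt (phi d m p x) \<le> sqrt (R\<^sup>2)" by (rule real_sqrt_le_mono)
      thus ?thesis using R(2) by simp
    qed
    have sy: "sqrt (phi d m p y) \<le> R"
    proof -
      have "phi d m p y \<le> R\<^sup>2" using phi_le_norm[where m=m and d=d and p=p and x=y, OF m p0] R that by fastforce
      hence "sqrt (phi d m p y) \<le> sqrt (R\<^sup>2)" by (rule real_sqrt_le_mono)
      thus ?thesis using R(2) by simp
    qed
    have "\<bar>phi d m p x - phi d m p y\<bar> = \<bar>sqrt (phi d m p x) - sqrt (phi d m p y)\<bar> * (sqrt (phi d m p x) + sqrt (phi d m p y))"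
    proof -
      have "phi d m p x - phi d m p y = (sqrt (phi d m p x) - sqrt (phi d m p y)) * (sqrt (phi d m p x) + sqrt (phi d m p y))"
        using phi_nonneg[of d m p x] phi_nonneg[of d m p y] by (simp add: algebra_simps)
      thus ?thesis by (metis abs_mult abs_of_nonneg add_nonneg_nonneg real_sqrt_ge_zero phi_nonneg)
    qed
    also have "\<dots> \<le> sqrt (sqd d x y) * (2 * R)"
      using sqrt_phi_diff[OF m, of d p x y] sx sy by (intro mult_mono) (auto simp: sqd_nonneg phi_nonneg)
    finally have "c * \<bar>phi d m p x - phi d m p y\<bar> \<le> c * (sqrt (sqd d x y) * (2 * R))"
      using c by (intro mult_left_mono)
    also have "\<dots> = (2 * c * R) * sqrt (sqd d x y)" by simp
    also have "\<dots> \<le> A * sqrt (sqd d x y)" using cA by (intro mult_right_mono) (auto simp: sqd_nonneg)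
    moreover have "\<bar>c * phi d m p x - c * phi d m p y\<bar> = c * \<bar>phi d m p x - phi d m p y\<bar>"
    proof -
      have "c * phi d m p x - c * phi d m p y = c * (phi d m p x - phi d m p y)" by (simp add: algebra_simps)
      thus ?thesis using c by (simp only: abs_mult abs_of_nonneg)
    qed
    ultimately show ?thesis by (simp add: dst_sqd)
  qed
  have dd: "\<bar>dir_deriv d g \<theta> x - dir_deriv d g \<theta> y\<bar> \<le> B * dst d x y" if th: "\<theta> \<in> sphere_d d" for \<theta> x y
  proof -
    have th1: "(\<Sum>k<d. (\<theta> k)\<^sup>2) = 1"
      using th by (simp add: sphere_d_def nrm_def ip_def power2_eq_square)
    define S where "S = (\<Sum>k<d. \<theta> k * ((x k - prj d m p x k) - (y k - prj d m p y k)))"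
    have "dir_deriv d g \<theta> x - dir_deriv d g \<theta> y = (\<Sum>k<d. \<theta> k * (g x k - g y k))"
      by (simp add: dir_deriv_def sum_subtractf right_diff_distrib)
    also have "\<dots> = (\<Sum>k<d. 2 * c * (\<theta> k * ((x k - prj d m p x k) - (y k - prj d m p y k))))"
      by (intro sum.cong) (auto simp: g_def algebra_simps)
    also have "\<dots> = 2 * c * S" by (simp add: sum_distrib_left S_def)
    finally have e: "\<bar>dir_deriv d g \<theta> x - dir_deriv d g \<theta> y\<bar> = 2 * c * \<bar>S\<bar>" using c by (simp add: abs_mult)
    have "\<bar>S\<bar> \<le> sqrt (\<Sum>k<d. (\<theta> k)\<^sup>2) * sqrt (\<Sum>k<d. ((x k - prj d m p x k) - (y k - prj d m p y k))\<^sup>2)"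
      unfolding S_def by (rule cs_sum)
    hence "\<bar>dir_deriv d g \<theta> x - dir_deriv d g \<theta> y\<bar> \<le> 2 * c * (sqrt (\<Sum>k<d. (\<theta> k)\<^sup>2) * sqrt (\<Sum>k<d. ((x k - prj d m p x k) - (y k - prj d m p y k))\<^sup>2))"
      unfolding e using c by (intro mult_left_mono) auto
    also have "\<dots> \<le> 2 * c * sqrt (sqd d x y)"
      using c prj_firm[OF m, where y'=x and y=y and d=d and p=p] th1 by (intro mult_left_mono) auto
    also have "\<dots> \<le> B * sqrt (sqd d x y)" using cB by (intro mult_right_mono) (auto simp: sqd_nonneg)
    finally show ?thesis by (simp add: dst_sqd)
  qed
  show ?thesis unfolding C1_class_def is_C1_def
    using contphi contg deriv bnd lip dd by blast
qed

lemma C1_class_neg: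
  assumes "f \<in> C1_class d A B K" shows "(\<lambda>x. - f x) \<in> C1_class d A B K"
proof -
  obtain g where g: "is_C1 d K f g" "\<forall>x\<in>K. \<bar>f x\<bar> \<le> 1" "\<forall>x\<in>K. \<forall>y\<in>K. \<bar>f x - f y\<bar> \<le> A * dst d x y"
    "\<forall>\<theta>\<in>sphere_d d. \<forall>x\<in>K. \<forall>y\<in>K. \<bar>dir_deriv d g \<theta> x - dir_deriv d g \<theta> y\<bar> \<le> B * dst d x y"
    using assms unfolding C1_class_def by blast
  define g' where "g' = (\<lambda>x i. - g x i)"
  have dd: "dir_deriv d g' \<theta> x = - dir_deriv d g \<theta> x" for \<theta> x
    by (simp add: dir_deriv_def g'_def sum_negf)
  have "is_C1 d K (\<lambda>x. - f x) g'"
    using g(1) unfolding is_C1_def g'_def by (auto intro: continuous_intros DERIV_minus)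
  moreover have "\<forall>x\<in>K. \<forall>y\<in>K. \<bar>- f x - - f y\<bar> \<le> A * dst d x y" using g(3) by (auto simp: abs_minus_commute)
  moreover have "\<forall>\<theta>\<in>sphere_d d. \<forall>x\<in>K. \<forall>y\<in>K. \<bar>dir_deriv d g' \<theta> x - dir_deriv d g' \<theta> y\<bar> \<le> B * dst d x y"
    using g(4) by (simp add: dd abs_minus_commute)
  ultimately show ?thesis using g(2) unfolding C1_class_def by auto
qed



lemma space_leb: "space (leb d) = dvec d"
  by (simp add: leb_def space_PiM dvec_def)

lemma meas_coord: "(\<lambda>x. x i) \<in> borel_measurable (leb d)"
proof (cases "i < d")
  case True
  have "(\<lambda>x. x i) \<in> measurable (leb d) lborel"
    unfolding leb_def by (rule measurable_component_singleton) (use True in auto)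
  thus ?thesis by simp
next
  case False
  have "\<forall>x\<in>space (leb d). x i = undefined"
    using False by (auto simp: space_leb dvec_def PiE_def extensional_def)
  thus ?thesis by (subst measurable_cong[where g="\<lambda>x. undefined"]) auto
qed

lemma meas_id: "(\<lambda>x. x) \<in> borel_measurable (leb d)"
  by (rule measurable_coordinatewise_then_product) (rule meas_coord)

lemma meas_cont:
  fixes F :: "(nat \<Rightarrow> real) \<Rightarrow> real"
  assumes "continuous_on UNIV F"
  shows "F \<in> borel_measurable (leb d)"
  using measurable_compose[OF meas_id borel_measurable_continuous_onI[OF assms]] by simp

lemma meas_sum_sq: "(\<lambda>x. \<Sum>k<d'. (x k)\<^sup>2) \<in> borel_measurable (leb d)"
  by (intro borel_measurable_sum borel_measurable_power meas_coord)

lemma meas_ip: "(\<lambda>x. \<Sum>k<d'. x k * q k) \<in> borel_measurable (leb d)"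
  by (intro borel_measurable_sum borel_measurable_times meas_coord borel_measurable_const)

lemma integ_alt: "integ d K f = (\<integral>x. indicator K x * f x \<partial>leb d)"
  by (simp add: integ_def set_lebesgue_integral_def)

lemma set_integrable_bounded:
  fixes f :: "(nat \<Rightarrow> real) \<Rightarrow> real"
  assumes "K \<in> sets (leb d)" "emeasure (leb d) K < \<infinity>" "f \<in> borel_measurable (leb d)"
    and "\<forall>x\<in>K. \<bar>f x\<bar> \<le> C"
  shows "integrable (leb d) (\<lambda>x. indicator K x * f x)"
proof -
  have "integrable (leb d) (\<lambda>x. indicator K x *\<^sub>R f x)"
    by (rule integrableI_bounded_set_indicator[where B=C, OF assms(1,3,2)]) (use assms(4) in auto)
  thus ?thesis by simp
qed


lemma K_sets:
  assumes "isotropic d K" shows "K \<in> sets (leb d)" "emeasure (leb d) K = 1" "measure (leb d) K = 1"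
proof -
  have e: "emeasure (leb d) K = 1" using assms by (simp add: isotropic_def)
  thus "K \<in> sets (leb d)" using emeasure_notin_sets by fastforce
  show "emeasure (leb d) K = 1" by fact
  thus "measure (leb d) K = 1" by (simp add: measure_def)
qed

definition unitv :: "nat \<Rightarrow> nat \<Rightarrow> nat \<Rightarrow> real" where
  "unitv d k = restrict (\<lambda>j. if j = k then 1 else 0) {..<d}"

lemma ip_unitv: "k < d \<Longrightarrow> ip d x (unitv d k) = x k"
proof -
  assume k: "k < d"
  have "ip d x (unitv d k) = (\<Sum>j<d. if j = k then x k else 0)"
    unfolding ip_def unitv_def by (intro sum.cong) auto
  thus ?thesis using k by simp
qed

lemma unitv_sphere: "k < d \<Longrightarrow> unitv d k \<in> sphere_d d"
proof -
  assume k: "k < d"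
  have "ip d (unitv d k) (unitv d k) = 1" using ip_unitv[OF k, of "unitv d k"] k by (simp add: unitv_def)
  thus ?thesis by (simp add: sphere_d_def nrm_def dvec_def unitv_def)
qed

lemma iso_const_prop:
  assumes "1 \<le> d" "isotropic d K"
  shows "iso_const d K > 0" "\<forall>\<theta>\<in>sphere_d d. integ d K (\<lambda>x. (ip d x \<theta>)\<^sup>2) = (iso_const d K)\<^sup>2"
proof -
  obtain L where L: "L > 0" "\<forall>\<theta>\<in>sphere_d d. integ d K (\<lambda>x. (ip d x \<theta>)\<^sup>2) = L\<^sup>2"
    using assms(2) by (auto simp: isotropic_def)
  have u: "unitv d 0 \<in> sphere_d d" using assms(1) unitv_sphere by auto
  have "iso_const d K = L"
    unfolding iso_const_def
  proof (rule the_equality)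
    show "0 < L \<and> (\<forall>\<theta>\<in>sphere_d d. integ d K (\<lambda>x. (ip d x \<theta>)\<^sup>2) = L\<^sup>2)" using L by blast
    fix L' assume L': "0 < L' \<and> (\<forall>\<theta>\<in>sphere_d d. integ d K (\<lambda>x. (ip d x \<theta>)\<^sup>2) = L'\<^sup>2)"
    hence "L'\<^sup>2 = L\<^sup>2" using L u by metis
    thus "L' = L" using L L' by (simp add: power2_eq_iff_nonneg)
  qed
  thus "iso_const d K > 0" "\<forall>\<theta>\<in>sphere_d d. integ d K (\<lambda>x. (ip d x \<theta>)\<^sup>2) = (iso_const d K)\<^sup>2"
    using L by auto
qed

lemma nrm_sq: "(nrm d x)\<^sup>2 = (\<Sum>k<d. (x k)\<^sup>2)"
  unfolding nrm_def ip_def by (simp add: power2_eq_square[symmetric] sum_nonneg)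

lemma cont_nrm: "continuous_on UNIV (nrm d)"
  unfolding nrm_def ip_def
  by (intro continuous_intros continuous_on_product_coordinates)

lemma rad_bound:
  assumes "convex_body d K" "x \<in> K" shows "nrm d x \<le> rad d K"
proof -
  have "compact K" using assms(1) by (simp add: convex_body_def)
  hence "compact (nrm d ` K)" by (rule compact_continuous_image[OF continuous_on_subset[OF cont_nrm subset_UNIV]])
  hence "bdd_above (nrm d ` K)" by (intro bounded_imp_bdd_above compact_imp_bounded)
  thus ?thesis unfolding rad_def using assms(2) by (rule cSUP_upper2) auto
qed

lemma sum_sq_le_rad:
  assumes "convex_body d K" "x \<in> K" shows "(\<Sum>k<d. (x k)\<^sup>2) \<le> (rad d K)\<^sup>2"
proof -
  have "0 \<le> nrm d x" by (simp add: nrm_def ip_def sum_nonneg)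
  hence "(nrm d x)\<^sup>2 \<le> (rad d K)\<^sup>2" using rad_bound[OF assms] by (intro power_mono)
  thus ?thesis by (simp add: nrm_sq)
qed

lemma coord_sq_le: "k < d \<Longrightarrow> ((x::nat\<Rightarrow>real) k)\<^sup>2 \<le> (\<Sum>j<d. (x j)\<^sup>2)"
  by (rule member_le_sum[where f="\<lambda>j. (x j)\<^sup>2"]) auto

lemma second_moment:
  assumes "1 \<le> d" "isotropic d K" "convex_body d K"
  shows "integ d K (\<lambda>x. \<Sum>k<d. (x k)\<^sup>2) = real d * (iso_const d K)\<^sup>2"
proof -
  note Ks = K_sets[OF assms(2)]
  have int: "integrable (leb d) (\<lambda>x. indicator K x * (x k)\<^sup>2)" if "k < d" for k
    by (rule set_integrable_bounded[where C="(rad d K)\<^sup>2"])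
       (use Ks that sum_sq_le_rad[OF assms(3)] coord_sq_le[OF that] in \<open>auto intro: order_trans borel_measurable_power meas_coord\<close>)
  have "integ d K (\<lambda>x. \<Sum>k<d. (x k)\<^sup>2) = (\<integral>x. (\<Sum>k<d. indicator K x * (x k)\<^sup>2) \<partial>leb d)"
    by (simp add: integ_alt sum_distrib_left)
  also have "\<dots> = (\<Sum>k<d. (\<integral>x. indicator K x * (x k)\<^sup>2 \<partial>leb d))"
    using Bochner_Integration.integral_sum[where f="\<lambda>k x. indicator K x * (x k)\<^sup>2" and I="{..<d}" and M="leb d"] int by simp
  also have "\<dots> = (\<Sum>k<d. (iso_const d K)\<^sup>2)"
  proof (intro sum.cong refl)
    fix k assume "k \<in> {..<d}"
    hence k: "k < d" by simp
    have "(\<integral>x. indicator K x * (x k)\<^sup>2 \<partial>leb d) = integ d K (\<lambda>x. (ip d x (unitv d k))\<^sup>2)"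
      by (simp add: integ_alt ip_unitv[OF k])
    also have "\<dots> = (iso_const d K)\<^sup>2" using iso_const_prop[OF assms(1,2)] unitv_sphere[OF k] by blast
    finally show "(\<integral>x. indicator K x * (x k)\<^sup>2 \<partial>leb d) = (iso_const d K)\<^sup>2" .
  qed
  finally show ?thesis by simp
qed


lemma finite_sub_K:
  assumes "isotropic d K" "A \<in> sets (leb d)"
  shows "emeasure (leb d) (K \<inter> A) \<le> 1" "K \<inter> A \<in> fmeasurable (leb d)"
proof -
  note Ks = K_sets[OF assms(1)]
  have "emeasure (leb d) (K \<inter> A) \<le> emeasure (leb d) K" by (rule emeasure_mono) (use Ks in auto)
  thus "emeasure (leb d) (K \<inter> A) \<le> 1" using Ks by simp
  thus "K \<inter> A \<in> fmeasurable (leb d)" using Ks assms(2)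
    by (auto simp: fmeasurable_def intro: le_less_trans)
qed

lemma large_mass:
  assumes d: "1 \<le> d" and iso: "isotropic d K" and cb: "convex_body d K"
    and R: "(rad d K)\<^sup>2 \<le> 4 * real d * (iso_const d K)\<^sup>2"
  shows "3/16 \<le> measure (leb d) (K \<inter> {x \<in> space (leb d). real d * (iso_const d K)\<^sup>2 / 4 \<le> (\<Sum>k<d. (x k)\<^sup>2)})"
proof -
  define L where "L = iso_const d K"
  define Lg where "Lg = {x \<in> space (leb d). real d * L\<^sup>2 / 4 \<le> (\<Sum>k<d. (x k)\<^sup>2)}"
  define R2 where "R2 = (rad d K)\<^sup>2"
  note Ks = K_sets[OF iso]
  have Lg: "Lg \<in> sets (leb d)" unfolding Lg_def by (rule borel_measurable_le[OF borel_measurable_const meas_sum_sq])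
  have Lp: "L > 0" using iso_const_prop[OF d iso] by (simp add: L_def)
  have dL: "real d * L\<^sup>2 > 0" using d Lp by simp
  have Ksp: "K \<subseteq> space (leb d)" using Ks(1) sets.sets_into_space by blast
  have pw: "indicator K x * (\<Sum>k<d. (x k)\<^sup>2) \<le> indicator K x * (real d * L\<^sup>2 / 4) + R2 * indicator (K \<inter> Lg) x" for x
  proof (cases "x \<in> K")
    case True
    have "(\<Sum>k<d. (x k)\<^sup>2) \<le> R2" using sum_sq_le_rad[OF cb True] by (simp add: R2_def)
    hence "(\<Sum>k<d. (x k)\<^sup>2) \<le> real d * L\<^sup>2 / 4 + R2" by (rule add_increasing[rotated]) simp
    moreover have "x \<in> space (leb d)" using True Ksp by blast
    ultimately show ?thesis using True Lp
      by (cases "x \<in> Lg") (auto simp: Lg_def)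
  next
    case False
    have "0 \<le> R2 * indicator (K \<inter> Lg) x" by (simp add: R2_def)
    thus ?thesis using False by simp
  qed
  have i1: "integrable (leb d) (\<lambda>x. indicator K x * (\<Sum>k<d. (x k)\<^sup>2))"
    by (rule set_integrable_bounded[where C=R2]) (use Ks sum_sq_le_rad[OF cb] in \<open>auto simp: R2_def meas_sum_sq abs_of_nonneg sum_nonneg\<close>)
  have i2: "integrable (leb d) (\<lambda>x. indicator K x * (real d * L\<^sup>2 / 4))"
    by (rule set_integrable_bounded[where C="\<bar>real d * L\<^sup>2 / 4\<bar>"]) (use Ks in auto)
  have fin: "emeasure (leb d) (K \<inter> Lg) < \<infinity>" using finite_sub_K(1)[OF iso Lg] by (simp add: order_le_less_trans)
  have i3: "integrable (leb d) (\<lambda>x. R2 * indicator (K \<inter> Lg) x)"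
    using Ks(1) Lg fin by (intro integrable_mult_right integrable_real_indicator) auto
  have "real d * L\<^sup>2 = (\<integral>x. indicator K x * (\<Sum>k<d. (x k)\<^sup>2) \<partial>leb d)"
    using second_moment[OF d iso cb] by (simp add: integ_alt L_def)
  also have "\<dots> \<le> (\<integral>x. indicator K x * (real d * L\<^sup>2 / 4) + R2 * indicator (K \<inter> Lg) x \<partial>leb d)"
    by (rule integral_mono[OF i1 Bochner_Integration.integrable_add[OF i2 i3]]) (use pw in auto)
  also have "\<dots> = (\<integral>x. indicator K x * (real d * L\<^sup>2 / 4) \<partial>leb d) + (\<integral>x. R2 * indicator (K \<inter> Lg) x \<partial>leb d)"
    by (rule Bochner_Integration.integral_add[OF i2 i3])
  also have "\<dots> = real d * L\<^sup>2 / 4 + R2 * measure (leb d) (K \<inter> Lg)"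
  proof -
    have "(\<integral>x. indicator K x * (real d * L\<^sup>2 / 4) \<partial>leb d) = measure (leb d) K * (real d * L\<^sup>2 / 4)"
      using Ks by (simp add: Int_absorb2[OF Ksp])
    moreover have "(\<integral>x. R2 * indicator (K \<inter> Lg) x \<partial>leb d) = R2 * measure (leb d) (K \<inter> Lg)"
    proof -
      have "K \<inter> Lg \<inter> space (leb d) = K \<inter> Lg" using Ksp by blast
      thus ?thesis by simp
    qed
    ultimately show ?thesis using Ks by simp
  qed
  finally have "3 / 4 * (real d * L\<^sup>2) \<le> R2 * measure (leb d) (K \<inter> Lg)" by simp
  also have "\<dots> \<le> 4 * real d * L\<^sup>2 * measure (leb d) (K \<inter> Lg)"
    using R by (intro mult_right_mono) (auto simp: R2_def L_def)
  finally have "real d * L\<^sup>2 * (3/16) \<le> real d * L\<^sup>2 * measure (leb d) (K \<inter> Lg)" by simp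
  hence "3/16 \<le> measure (leb d) (K \<inter> Lg)" using dL by (simp only: mult_le_cancel_left_pos)
  thus ?thesis by (simp add: Lg_def L_def)
qed


lemma psi_markov:
  assumes iso: "isotropic d K" and s: "0 < s" and t: "0 < t"
    and I: "(\<integral>\<^sup>+x. ennreal (exp (\<bar>ip d x \<theta> / s\<bar> powr 2)) \<partial>uniform_measure (leb d) K) \<le> 2"
  shows "measure (leb d) (K \<inter> {x \<in> space (leb d). t < ip d x \<theta>}) \<le> 2 * exp (- (t / s)\<^sup>2)"
proof -
  note Ks = K_sets[OF iso]
  define H where "H = {x \<in> space (leb d). t < ip d x \<theta>}"
  have H: "H \<in> sets (leb d)" unfolding H_def ip_def
    by (rule borel_measurable_less[OF borel_measurable_const meas_ip])
  have pw: "ennreal (exp ((t / s)\<^sup>2)) * indicator H x \<le> ennreal (exp (\<bar>ip d x \<theta> / s\<bar> powr 2))" for x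
  proof (cases "x \<in> H")
    case True
    hence lt: "t / s < ip d x \<theta> / s" using s by (simp add: H_def divide_strict_right_mono)
    hence pos: "0 < ip d x \<theta> / s" using t s by (smt (verit) divide_pos_pos)
    have "(t / s)\<^sup>2 \<le> (ip d x \<theta> / s)\<^sup>2" using lt t s by (intro power_mono) auto
    also have "\<dots> = \<bar>ip d x \<theta> / s\<bar> powr 2" using pos by (simp only: abs_of_pos powr_numeral less_imp_le)
    finally show ?thesis using True by simp
  qed simp
  have "ennreal (exp ((t / s)\<^sup>2)) * emeasure (uniform_measure (leb d) K) H
      = (\<integral>\<^sup>+x. ennreal (exp ((t / s)\<^sup>2)) * indicator H x \<partial>uniform_measure (leb d) K)"
    using H by (simp add: nn_integral_cmult_indicator)
  also have "\<dots> \<le> 2" using pw by (intro order_trans[OF nn_integral_mono I]) auto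
  finally have e: "ennreal (exp ((t / s)\<^sup>2)) * emeasure (leb d) (K \<inter> H) \<le> 2"
    using Ks H by (simp add: divide_ennreal_def)
  have fm: "K \<inter> H \<in> fmeasurable (leb d)" by (rule finite_sub_K(2)[OF iso H])
  hence "emeasure (leb d) (K \<inter> H) = ennreal (measure (leb d) (K \<inter> H))" by (simp add: emeasure_eq_measure2)
  with e have "ennreal (exp ((t / s)\<^sup>2) * measure (leb d) (K \<inter> H)) \<le> ennreal 2"
    by (simp add: ennreal_mult'')
  hence "exp ((t / s)\<^sup>2) * measure (leb d) (K \<inter> H) \<le> 2" by (subst (asm) ennreal_le_iff) auto
  hence "measure (leb d) (K \<inter> H) \<le> 2 / exp ((t / s)\<^sup>2)" by (simp add: field_simps)
  thus ?thesis by (simp add: H_def exp_minus field_simps)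
qed


lemma cap_bound:
  assumes d: "1 \<le> d" and iso: "isotropic d K" and b: "0 < b"
    and qR: "nrm d q \<le> 2 * sqrt (real d) * iso_const d K"
    and psi: "\<forall>\<theta>\<in>sphere_d d. \<exists>s. 0 < s \<and> s < 2 * b * iso_const d K \<and>
       (\<integral>\<^sup>+x. ennreal (exp (\<bar>ip d x \<theta> / s\<bar> powr 2)) \<partial>uniform_measure (leb d) K) \<le> 2"
  shows "measure (leb d) (K \<inter> {x \<in> space (leb d). real d * (iso_const d K)\<^sup>2 / 8 < (\<Sum>k<d. x k * q k)})
           \<le> 2 * exp (- (real d / (1024 * b\<^sup>2)))"
proof -
  define L where "L = iso_const d K"
  define N where "N = nrm d q"
  define H where "H = {x \<in> space (leb d). real d * L\<^sup>2 / 8 < (\<Sum>k<d. x k * q k)}"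
  have Lp: "L > 0" using iso_const_prop[OF d iso] by (simp add: L_def)
  have dp: "real d > 0" using d by simp
  have N0: "N \<ge> 0" by (simp add: N_def nrm_def ip_def sum_nonneg)
  have NN: "N\<^sup>2 = (\<Sum>k<d. (q k)\<^sup>2)" by (simp add: N_def nrm_sq)
  show ?thesis
  proof (cases "N = 0")
    case True
    hence "(\<Sum>k<d. (q k)\<^sup>2) = 0" using NN by simp
    hence "\<forall>k\<in>{..<d}. (q k)\<^sup>2 = 0" by (subst (asm) sum_nonneg_eq_0_iff) auto
    hence "(\<Sum>k<d. x k * q k) = 0" for x by simp
    moreover have z: "0 \<le> real d * L\<^sup>2" by simp
    ultimately have "H = {}" by (auto simp: H_def) (use z in linarith)
    hence "measure (leb d) (K \<inter> H) = 0" by simp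
    moreover have "0 \<le> 2 * exp (- (real d / (1024 * b\<^sup>2)))" by simp
    ultimately show ?thesis unfolding H_def L_def by linarith
  next
    case False
    hence Np: "N > 0" using N0 by simp
    define \<theta> where "\<theta> = restrict (\<lambda>k. q k / N) {..<d}"
    have ipth: "ip d x \<theta> = (\<Sum>k<d. x k * q k) / N" for x
      by (simp add: ip_def \<theta>_def sum_divide_distrib)
    have "ip d \<theta> \<theta> = (\<Sum>k<d. (q k)\<^sup>2) / N\<^sup>2"
      by (simp add: ip_def \<theta>_def sum_divide_distrib power2_eq_square)
    also have "\<dots> = N\<^sup>2 / N\<^sup>2" by (simp only: NN)
    also have "\<dots> = 1" using Np by simp
    finally have "ip d \<theta> \<theta> = 1" .
    hence th: "\<theta> \<in> sphere_d d" by (simp add: sphere_d_def nrm_def dvec_def \<theta>_def)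
    obtain s where s: "0 < s" "s < 2 * b * L"
      and I: "(\<integral>\<^sup>+x. ennreal (exp (\<bar>ip d x \<theta> / s\<bar> powr 2)) \<partial>uniform_measure (leb d) K) \<le> 2"
      using psi th by (auto simp: L_def)
    define t0 where "t0 = sqrt (real d) * L / 16"
    have t0: "t0 > 0" using dp Lp by (simp add: t0_def)
    have sub: "K \<inter> H \<subseteq> K \<inter> {x \<in> space (leb d). t0 < ip d x \<theta>}"
    proof safe
      fix x assume x: "x \<in> H"
      define sd where "sd = sqrt (real d)"
      have sdp: "sd > 0" using dp by (simp add: sd_def)
      have sq: "real d = sd * sd" using dp by (simp add: sd_def)
      have "t0 = (real d * L\<^sup>2 / 8) / (2 * sqrt (real d) * L)"
        unfolding t0_def sd_def[symmetric] sq using sdp Lp by (simp add: field_simps power2_eq_square)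
      also have "\<dots> \<le> (real d * L\<^sup>2 / 8) / N"
        using qR Np dp Lp by (intro divide_left_mono) (auto simp: N_def L_def)
      also have "\<dots> < (\<Sum>k<d. x k * q k) / N" using x Np by (intro divide_strict_right_mono) (auto simp: H_def)
      finally show "t0 < ip d x \<theta>" by (simp add: ipth)
      show "x \<in> space (leb d)" using x by (simp add: H_def)
    qed
    have Hs: "H \<in> sets (leb d)" unfolding H_def by (rule borel_measurable_less[OF borel_measurable_const meas_ip])
    have Hs2: "{x \<in> space (leb d). t0 < ip d x \<theta>} \<in> sets (leb d)" unfolding ip_def
      by (rule borel_measurable_less[OF borel_measurable_const meas_ip])
    have "measure (leb d) (K \<inter> H) \<le> measure (leb d) (K \<inter> {x \<in> space (leb d). t0 < ip d x \<theta>})"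
      by (rule measure_mono_fmeasurable[OF sub]) (use K_sets[OF iso] Hs finite_sub_K(2)[OF iso Hs2] in auto)
    also have "\<dots> \<le> 2 * exp (- (t0 / s)\<^sup>2)" by (rule psi_markov[OF iso s(1) t0 I])
    also have "\<dots> \<le> 2 * exp (- (real d / (1024 * b\<^sup>2)))"
    proof -
      have "t0 / (2 * b * L) \<le> t0 / s" using s t0 b Lp by (intro divide_left_mono) auto
      hence "(t0 / (2 * b * L))\<^sup>2 \<le> (t0 / s)\<^sup>2" using t0 b Lp by (intro power_mono) auto
      moreover have "(t0 / (2 * b * L))\<^sup>2 = real d / (1024 * b\<^sup>2)"
      proof -
        define sd where "sd = sqrt (real d)"
        have sq: "real d = sd * sd" using dp by (simp add: sd_def)
        show ?thesis unfolding t0_def sd_def[symmetric] sq using Lp b by (simp add: field_simps power2_eq_square)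
      qed
      ultimately show ?thesis by simp
    qed
    finally show ?thesis by (simp add: H_def L_def)
  qed
qed



lemma adapt_zero:
  "(\<forall>j<n. f (P j (replicate j 0)) = 0) \<Longrightarrow> adapt_info P f n = replicate n 0"
proof (induction n)
  case 0 thus ?case by simp
next
  case (Suc n)
  hence "adapt_info P f n = replicate n 0" by simp
  moreover have "f (P n (replicate n 0)) = 0" using Suc.prems by simp
  ultimately show ?case by (simp add: Let_def replicate_append_same)
qed

lemma integral_ind_comb:
  fixes M :: "'a measure"
  assumes A: "A \<in> sets M" "emeasure M A < \<infinity>" and Bs: "\<And>j. j \<in> J \<Longrightarrow> B j \<in> sets M \<and> emeasure M (B j) < \<infinity>"
  shows "integrable M (\<lambda>x. C * (indicator A x - (\<Sum>j\<in>J. indicator (B j) x)))"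
    "(\<integral>x. C * (indicator A x - (\<Sum>j\<in>J. indicator (B j) x)) \<partial>M) = C * (measure M A - (\<Sum>j\<in>J. measure M (B j)))"
proof -
  have iA: "integrable M (indicator A :: 'a \<Rightarrow> real)" using A by simp
  have iB: "integrable M (\<lambda>x. (\<Sum>j\<in>J. (indicator (B j) x :: real)))"
    using Bs by (intro Bochner_Integration.integrable_sum integrable_real_indicator) auto
  show "integrable M (\<lambda>x. C * (indicator A x - (\<Sum>j\<in>J. indicator (B j) x)))"
    using iA iB by (intro integrable_mult_right Bochner_Integration.integrable_diff) auto
  have "(\<integral>x. C * (indicator A x - (\<Sum>j\<in>J. indicator (B j) x)) \<partial>M) = C * ((\<integral>x. indicator A x \<partial>M) - (\<integral>x. (\<Sum>j\<in>J. indicator (B j) x) \<partial>M))"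
    using iA iB by (simp add: Bochner_Integration.integral_diff)
  also have "(\<integral>x. (\<Sum>j\<in>J. indicator (B j) x) \<partial>M) = (\<Sum>j\<in>J. (\<integral>x. (indicator (B j) x :: real) \<partial>M))"
    using Bs by (intro Bochner_Integration.integral_sum integrable_real_indicator) auto
  also have "\<dots> = (\<Sum>j\<in>J. measure M (B j))"
    using Bs by (intro sum.cong) (auto simp: sets.Int_space_eq2)
  also have "(\<integral>x. (indicator A x :: real) \<partial>M) = measure M A" using A by (simp add: sets.Int_space_eq2)
  finally show "(\<integral>x. C * (indicator A x - (\<Sum>j\<in>J. indicator (B j) x)) \<partial>M) = C * (measure M A - (\<Sum>j\<in>J. measure M (B j)))" .
qed


lemma psi_exists:
  assumes d: "1 \<le> d" and iso: "isotropic d K" and b: "0 < b"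
    and psi: "\<forall>\<theta>\<in>sphere_d d. psi_norm 2 (uniform_measure (leb d) K) (\<lambda>x. ip d x \<theta>)
                 \<le> ereal (b * sqrt (integ d K (\<lambda>x. (ip d x \<theta>)\<^sup>2)))"
  shows "\<forall>\<theta>\<in>sphere_d d. \<exists>s. 0 < s \<and> s < 2 * b * iso_const d K \<and>
       (\<integral>\<^sup>+x. ennreal (exp (\<bar>ip d x \<theta> / s\<bar> powr 2)) \<partial>uniform_measure (leb d) K) \<le> 2"
proof
  fix \<theta> assume th: "\<theta> \<in> sphere_d d"
  define L where "L = iso_const d K"
  have Lp: "L > 0" using iso_const_prop[OF d iso] by (simp add: L_def)
  have "integ d K (\<lambda>x. (ip d x \<theta>)\<^sup>2) = L\<^sup>2" using iso_const_prop[OF d iso] th by (simp add: L_def)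
  hence "sqrt (integ d K (\<lambda>x. (ip d x \<theta>)\<^sup>2)) = L" using Lp by simp
  hence "psi_norm 2 (uniform_measure (leb d) K) (\<lambda>x. ip d x \<theta>) \<le> ereal (b * L)"
    using psi th by metis
  also have "\<dots> < ereal (2 * b * L)" using b Lp by simp
  finally have "Inf {ereal s | s. s > 0 \<and> (\<integral>\<^sup>+ x. ennreal (exp (\<bar>ip d x \<theta> / s\<bar> powr 2)) \<partial>uniform_measure (leb d) K) \<le> 2}
      < ereal (2 * b * L)" by (simp add: psi_norm_def)
  then obtain y where "y \<in> {ereal s | s. s > 0 \<and> (\<integral>\<^sup>+ x. ennreal (exp (\<bar>ip d x \<theta> / s\<bar> powr 2)) \<partial>uniform_measure (leb d) K) \<le> 2}"
    "y < ereal (2 * b * L)" by (auto simp: Inf_less_iff)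
  thus "\<exists>s. 0 < s \<and> s < 2 * b * iso_const d K \<and>
       (\<integral>\<^sup>+x. ennreal (exp (\<bar>ip d x \<theta> / s\<bar> powr 2)) \<partial>uniform_measure (leb d) K) \<le> 2"
    by (auto simp: L_def)
qed

lemma main_d:
  assumes d: "1 \<le> d" and cb: "convex_body d K" and iso: "isotropic d K"
    and radb: "rad d K < 2 * sqrt (real d) * iso_const d K"
    and b: "0 < b"
    and psi: "\<forall>\<theta>\<in>sphere_d d. psi_norm 2 (uniform_measure (leb d) K) (\<lambda>x. ip d x \<theta>)
                 \<le> ereal (b * sqrt (integ d K (\<lambda>x. (ip d x \<theta>)\<^sup>2)))"
    and a: "0 < a" "a \<le> A * sqrt (real d) * iso_const d K" "a \<le> B * real d * (iso_const d K)\<^sup>2"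
    and eps: "\<epsilon> \<le> 3 * min (1/4) (a/4) / 512"
  shows "ereal (3/64 * exp (real d / (1024 * b\<^sup>2))) \<le> info_complexity d K (C1_class d A B K) \<epsilon>"
  unfolding info_complexity_def
proof (rule Inf_greatest, safe)
  fix n :: nat and P :: "nat \<Rightarrow> real list \<Rightarrow> nat \<Rightarrow> real" and \<phi> :: "real list \<Rightarrow> real"
  assume PK: "\<forall>j ys. P j ys \<in> K"
    and err: "(SUP f\<in>C1_class d A B K. ereal \<bar>integ d K f - \<phi> (adapt_info P f n)\<bar>) \<le> ereal \<epsilon>"
  define L where "L = iso_const d K"
  define \<kappa> where "\<kappa> = min (1/4) (a/4)"
  define c where "c = \<kappa> / (real d * L\<^sup>2)"
  define R where "R = 2 * sqrt (real d) * L"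
  define pts where "pts = (\<lambda>j. P j (replicate j 0))"
  define p where "p = (\<lambda>j. if j = 0 then (\<lambda>k. 0) else pts (j - 1))"
  define m where "m = Suc n"
  define f0 where "f0 = (\<lambda>y. c * phi d m p y)"
  define thr where "thr = 3/64 * exp (real d / (1024 * b\<^sup>2))"
  define e where "e = exp (- (real d / (1024 * b\<^sup>2)))"
  define F where "F = C1_class d A B K"
  note Ks = K_sets[OF iso]
  have Lp: "L > 0" using iso_const_prop[OF d iso] by (simp add: L_def)
  have dp: "real d > 0" using d by simp
  have sdp: "sqrt (real d) > 0" using dp by simp
  have kp: "\<kappa> > 0" using a by (simp add: \<kappa>_def)
  have cp: "c > 0" using kp dp Lp by (simp add: c_def)
  have mp: "0 < m" by (simp add: m_def)
  have Rp: "R > 0" using sdp Lp by (simp add: R_def)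
  have dsq: "real d = sqrt (real d) * sqrt (real d)" using dp by simp
  have Rsq: "R\<^sup>2 = 4 * (real d * L\<^sup>2)" unfolding R_def by (simp add: power_mult_distrib)
  have Kb: "\<forall>x\<in>K. (\<Sum>k<d. (x k)\<^sup>2) \<le> R\<^sup>2"
  proof
    fix x assume x: "x \<in> K"
    have "0 \<le> nrm d x" by (simp add: nrm_def ip_def sum_nonneg)
    hence "0 \<le> rad d K" using rad_bound[OF cb x] by linarith
    hence "(rad d K)\<^sup>2 \<le> R\<^sup>2" using radb by (intro power_mono) (auto simp: R_def L_def)
    thus "(\<Sum>k<d. (x k)\<^sup>2) \<le> R\<^sup>2" using sum_sq_le_rad[OF cb x] by linarith
  qed
  have nrmb: "nrm d x \<le> 2 * sqrt (real d) * L" if "x \<in> K" for x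
    using rad_bound[OF cb that] radb by (simp add: L_def)
  have cR: "c * R\<^sup>2 \<le> 1"
  proof -
    have "c * R\<^sup>2 = 4 * \<kappa>" using dp Lp by (simp add: c_def Rsq)
    thus ?thesis by (simp add: \<kappa>_def)
  qed
  have cA: "2 * c * R \<le> A"
  proof -
    have "2 * c * R = 4 * \<kappa> / (sqrt (real d) * L)"
      using sdp Lp by (subst c_def, subst R_def, subst dsq) (simp add: field_simps power2_eq_square)
    also have "\<dots> \<le> a / (sqrt (real d) * L)" using sdp Lp by (intro divide_right_mono) (auto simp: \<kappa>_def)
    also have "\<dots> \<le> A" using a(2) sdp Lp by (simp add: L_def field_simps)
    finally show ?thesis .
  qed
  have cB: "2 * c \<le> B"
  proof -
    have "2 * c = 2 * \<kappa> / (real d * L\<^sup>2)" by (simp add: c_def)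
    also have "\<dots> \<le> a / (real d * L\<^sup>2)" using dp Lp a(1) by (intro divide_right_mono) (auto simp: \<kappa>_def)
    also have "\<dots> \<le> B" using a(3) dp Lp by (simp add: L_def field_simps)
    finally show ?thesis .
  qed
  have p0: "\<forall>k<d. p 0 k = 0" by (simp add: p_def)
  have f0F: "f0 \<in> F" unfolding f0_def F_def
    by (rule fool_in_class[where m=m and d=d and p=p and c=c and K=K and R=R and A=A and B=B, OF mp p0 less_imp_le[OF cp] Kb less_imp_le[OF Rp] cR cA cB])
  have nf0F: "(\<lambda>x. - f0 x) \<in> F" using C1_class_neg f0F by (simp add: F_def)
  have z: "f0 (P j (replicate j 0)) = 0" if "j < n" for j
  proof -
    have "P j (replicate j 0) = p (Suc j)" by (simp add: p_def pts_def)
    thus ?thesis using phi_point[of "Suc j" m d p] that by (simp add: f0_def m_def)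
  qed
  have info1: "adapt_info P f0 n = replicate n 0" by (rule adapt_zero) (use z in auto)
  have info2: "adapt_info P (\<lambda>x. - f0 x) n = replicate n 0" by (rule adapt_zero) (use z in auto)
  define v where "v = \<phi> (replicate n 0)"
  define I where "I = integ d K f0"
  have In: "integ d K (\<lambda>x. - f0 x) = - I" by (simp add: I_def integ_alt)
  have e1: "\<bar>I - v\<bar> \<le> \<epsilon>"
  proof -
    have "ereal \<bar>integ d K f0 - \<phi> (adapt_info P f0 n)\<bar> \<le> ereal \<epsilon>"
      by (rule order_trans[OF SUP_upper[OF f0F[unfolded F_def]] err])
    thus ?thesis by (simp add: info1 I_def v_def)
  qed
  have e2: "\<bar>- I - v\<bar> \<le> \<epsilon>"
  proof -
    have "ereal \<bar>integ d K (\<lambda>x. - f0 x) - \<phi> (adapt_info P (\<lambda>x. - f0 x) n)\<bar> \<le> ereal \<epsilon>"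
      by (rule order_trans[OF SUP_upper[OF nf0F[unfolded F_def]] err])
    thus ?thesis by (simp add: info2 In v_def)
  qed
  have Ile: "I \<le> \<epsilon>" using e1 e2 by (simp add: abs_le_iff)
  define Lg where "Lg = {x \<in> space (leb d). real d * L\<^sup>2 / 4 \<le> (\<Sum>k<d. (x k)\<^sup>2)}"
  define H where "H = (\<lambda>j. {x \<in> space (leb d). real d * L\<^sup>2 / 8 < (\<Sum>k<d. x k * pts j k)})"
  have Lgs: "Lg \<in> sets (leb d)" unfolding Lg_def by (rule borel_measurable_le[OF borel_measurable_const meas_sum_sq])
  have Hs: "H j \<in> sets (leb d)" for j unfolding H_def by (rule borel_measurable_less[OF borel_measurable_const meas_ip])
  have Ksp: "K \<subseteq> space (leb d)" using Ks(1) sets.sets_into_space by blast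
  have f0nn: "0 \<le> f0 x" for x using cp phi_nonneg[of d m p x] by (simp add: f0_def)
  have pw: "(\<kappa> / 16) * (indicator (K \<inter> Lg) x - (\<Sum>j<n. indicator (K \<inter> H j) x)) \<le> indicator K x * f0 x" for x
  proof (cases "x \<in> K")
    case False thus ?thesis by simp
  next
    case xK: True
    show ?thesis
    proof (cases "\<exists>j<n. x \<in> H j")
      case True
      then obtain j where j: "j < n" "x \<in> H j" by blast
      have "indicator (K \<inter> H j) x \<le> (\<Sum>j<n. indicator (K \<inter> H j) x :: real)"
        using j by (intro member_le_sum) auto
      moreover have "indicator (K \<inter> H j) x = (1::real)" using j xK by simp
      moreover have "indicator (K \<inter> Lg) x \<le> (1::real)" by (simp add: indicator_def)
      ultimately have "indicator (K \<inter> Lg) x - (\<Sum>j<n. indicator (K \<inter> H j) x) \<le> (0::real)" by linarith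
      hence "(\<kappa> / 16) * (indicator (K \<inter> Lg) x - (\<Sum>j<n. indicator (K \<inter> H j) x)) \<le> 0"
        using kp by (simp add: mult_nonneg_nonpos)
      thus ?thesis using f0nn[of x] xK by simp
    next
      case False
      hence sum0: "(\<Sum>j<n. indicator (K \<inter> H j) x :: real) = 0" by (auto intro: sum.neutral)
      show ?thesis
      proof (cases "x \<in> Lg")
        case False thus ?thesis using sum0 f0nn[of x] xK by simp
      next
        case True
        have T: "\<forall>j<m. (\<Sum>k<d. x k * p j k) \<le> real d * L\<^sup>2 / 8"
        proof (intro allI impI)
          fix j assume "j < m"
          show "(\<Sum>k<d. x k * p j k) \<le> real d * L\<^sup>2 / 8"
          proof (cases j)
            case 0 thus ?thesis by (simp add: p_def)
          next
            case (Suc j')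
            hence "j' < n" using \<open>j < m\<close> by (simp add: m_def)
            hence "x \<notin> H j'" using \<open>\<not> (\<exists>j<n. x \<in> H j)\<close> by blast
            thus ?thesis using xK Ksp Suc by (auto simp: H_def p_def not_less)
          qed
        qed
        have "(\<Sum>k<d. (x k)\<^sup>2) / 4 \<le> phi d m p x"
          by (rule phi_lower[OF mp T]) (use True in \<open>simp add: Lg_def\<close>)
        moreover have "real d * L\<^sup>2 / 16 \<le> (\<Sum>k<d. (x k)\<^sup>2) / 4" using True by (simp add: Lg_def)
        ultimately have "real d * L\<^sup>2 / 16 \<le> phi d m p x" by linarith
        hence "c * (real d * L\<^sup>2 / 16) \<le> f0 x" unfolding f0_def using cp by (intro mult_left_mono) auto
        moreover have "c * (real d * L\<^sup>2 / 16) = \<kappa> / 16" using dp Lp by (simp add: c_def)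
        ultimately show ?thesis using xK True sum0 by simp
      qed
    qed
  qed
  have fin: "K \<inter> A' \<in> sets (leb d) \<and> emeasure (leb d) (K \<inter> A') < \<infinity>" if "A' \<in> sets (leb d)" for A'
    using finite_sub_K(1)[OF iso that] Ks(1) that by (auto simp: order_le_less_trans)
  have int1: "integrable (leb d) (\<lambda>x. indicator K x * f0 x)"
  proof (rule set_integrable_bounded[OF Ks(1)])
    show "emeasure (leb d) K < \<infinity>" using Ks by simp
    show "f0 \<in> borel_measurable (leb d)" unfolding f0_def
      by (intro borel_measurable_times borel_measurable_const meas_cont cont_phi[OF mp])
    show "\<forall>x\<in>K. \<bar>f0 x\<bar> \<le> 1" using f0F by (auto simp: F_def C1_class_def)
  qed
  note comb = integral_ind_comb[where M="leb d" and A="K \<inter> Lg" and B="\<lambda>j. K \<inter> H j" and J="{..<n}" and C="\<kappa>/16"]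
  have "(\<kappa> / 16) * (measure (leb d) (K \<inter> Lg) - (\<Sum>j<n. measure (leb d) (K \<inter> H j)))
      = (\<integral>x. (\<kappa> / 16) * (indicator (K \<inter> Lg) x - (\<Sum>j<n. indicator (K \<inter> H j) x)) \<partial>leb d)"
    by (rule comb(2)[symmetric]) (use fin Lgs Hs in auto)
  also have "\<dots> \<le> (\<integral>x. indicator K x * f0 x \<partial>leb d)"
    by (rule integral_mono[OF comb(1) int1]) (use fin Lgs Hs pw in auto)
  also have "\<dots> = I" by (simp add: I_def integ_alt)
  finally have Ige: "(\<kappa> / 16) * (measure (leb d) (K \<inter> Lg) - (\<Sum>j<n. measure (leb d) (K \<inter> H j))) \<le> I" .
  have m1: "3/16 \<le> measure (leb d) (K \<inter> Lg)"
  proof -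
    have "(rad d K)\<^sup>2 \<le> 4 * real d * (iso_const d K)\<^sup>2"
    proof -
      obtain x where "x \<in> K" using cb by (auto simp: convex_body_def)
      have "0 \<le> nrm d x" by (simp add: nrm_def ip_def sum_nonneg)
      hence "0 \<le> rad d K" using rad_bound[OF cb \<open>x \<in> K\<close>] by linarith
      hence "(rad d K)\<^sup>2 \<le> R\<^sup>2" using radb by (intro power_mono) (auto simp: R_def L_def)
      thus ?thesis using Rsq by (simp add: L_def)
    qed
    from large_mass[OF d iso cb this] show ?thesis by (simp add: Lg_def L_def)
  qed
  have psi': "\<forall>\<theta>\<in>sphere_d d. \<exists>s. 0 < s \<and> s < 2 * b * iso_const d K \<and>
       (\<integral>\<^sup>+x. ennreal (exp (\<bar>ip d x \<theta> / s\<bar> powr 2)) \<partial>uniform_measure (leb d) K) \<le> 2"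
    by (rule psi_exists[OF d iso b psi])
  have m2: "measure (leb d) (K \<inter> H j) \<le> 2 * e" for j
  proof -
    have "nrm d (pts j) \<le> 2 * sqrt (real d) * iso_const d K" using nrmb[of "pts j"] PK by (simp add: pts_def L_def)
    from cap_bound[OF d iso b this psi'] show ?thesis by (simp add: H_def e_def L_def)
  qed
  have "(\<Sum>j<n. measure (leb d) (K \<inter> H j)) \<le> (\<Sum>j<n. 2 * e)" by (intro sum_mono m2)
  hence msum: "(\<Sum>j<n. measure (leb d) (K \<inter> H j)) \<le> 2 * real n * e" by simp
  show "ereal thr \<le> ereal (real n)" unfolding thr_def[symmetric]
  proof (rule ccontr)
    assume "\<not> ereal thr \<le> ereal (real n)"
    hence nlt: "real n < thr" by simp
    have ep: "e > 0" by (simp add: e_def)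
    have "real n * e < thr * e" using nlt ep by simp
    also have "thr * e = 3/64" by (simp add: thr_def e_def exp_minus field_simps)
    finally have "2 * real n * e < 3/32" by simp
    hence "3/32 < measure (leb d) (K \<inter> Lg) - (\<Sum>j<n. measure (leb d) (K \<inter> H j))" using m1 msum by linarith
    hence "(\<kappa> / 16) * (3/32) < (\<kappa> / 16) * (measure (leb d) (K \<inter> Lg) - (\<Sum>j<n. measure (leb d) (K \<inter> H j)))"
      using kp by (intro mult_strict_left_mono) auto
    hence "3 * \<kappa> / 512 < I" using Ige by simp
    thus False using Ile eps by (simp add: \<kappa>_def)
  qed
qed



theorem theorem1p1:
  fixes Ks :: "nat \<Rightarrow> (nat \<Rightarrow> real) set" and A B :: "nat \<Rightarrow> real"
  assumes bodies: "\<forall>d\<ge>1. convex_body d (Ks d) \<and> symmetric_body d (Ks d) \<and> isotropic d (Ks d)"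
    and psi2: "uniform_psi_estimate 2 Ks"
    and rad: "limsup (\<lambda>d. ereal (rad d (Ks d) / (sqrt (real d) * iso_const d (Ks d)))) < 2"
    and Apos: "\<forall>d. A d > 0" and Bpos: "\<forall>d. B d > 0"
    and AB: "limsup (\<lambda>d. ereal (min (A d * sqrt (real d) * iso_const d (Ks d))
                                   (B d * real d * (iso_const d (Ks d))\<^sup>2))) > 0"
  shows "curse (\<lambda>d. C1_class d (A d) (B d) (Ks d)) Ks"
proof -
  obtain b where b: "b > 0" and psi: "\<forall>d. \<forall>\<theta>\<in>sphere_d d.
      psi_norm 2 (uniform_measure (leb d) (Ks d)) (\<lambda>x. ip d x \<theta>)
        \<le> ereal (b * sqrt (integ d (Ks d) (\<lambda>x. (ip d x \<theta>)\<^sup>2)))"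
    using psi2 by (auto simp: uniform_psi_estimate_def)
  obtain a where a0: "0 < ereal a" and alt: "ereal a < limsup (\<lambda>d. ereal (min (A d * sqrt (real d) * iso_const d (Ks d))
                                   (B d * real d * (iso_const d (Ks d))\<^sup>2)))"
    using ereal_dense2[OF AB] by blast
  have a: "a > 0" using a0 by simp
  define g where "g = (\<lambda>d. min (A d * sqrt (real d) * iso_const d (Ks d))
                                   (B d * real d * (iso_const d (Ks d))\<^sup>2))"
  have freq: "frequently (\<lambda>d. a < g d) sequentially"
  proof (rule ccontr)
    assume "\<not> ?thesis"
    hence "eventually (\<lambda>d. g d \<le> a) sequentially" by (simp add: not_frequently not_less)
    hence "eventually (\<lambda>d. ereal (g d) \<le> ereal a) sequentially" by (rule eventually_mono) simp
    hence "limsup (\<lambda>d. ereal (g d)) \<le> ereal a" by (rule Limsup_bounded)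
    thus False using alt by (simp add: g_def)
  qed
  have ev1: "eventually (\<lambda>d. ereal (rad d (Ks d) / (sqrt (real d) * iso_const d (Ks d))) < 2) sequentially"
    using Limsup_lessD[OF rad] by simp
  have ev2: "eventually (\<lambda>d. 1 \<le> d) sequentially" by (rule eventually_ge_at_top)
  have ev: "eventually (\<lambda>d. rad d (Ks d) / (sqrt (real d) * iso_const d (Ks d)) < 2 \<and> 1 \<le> d) sequentially"
    using eventually_conj[OF ev1 ev2] by (simp add: eventually_mono)
  define \<epsilon>0 where "\<epsilon>0 = 3 * min (1/4) (a/4) / 512"
  define \<gamma> where "\<gamma> = exp (1 / (1024 * b\<^sup>2)) - 1"
  have e0: "\<epsilon>0 > 0" using a by (simp add: \<epsilon>0_def)
  have g0: "\<gamma> > 0" using b by (simp add: \<gamma>_def)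
  have key: "\<forall>\<epsilon>. \<epsilon> \<le> \<epsilon>0 \<longrightarrow> ereal (3/64 * (1 + \<gamma>) ^ d) \<le> info_complexity d (Ks d) (C1_class d (A d) (B d) (Ks d)) \<epsilon>"
    if hd: "a < min (A d * sqrt (real d) * iso_const d (Ks d)) (B d * real d * (iso_const d (Ks d))\<^sup>2) \<and>
            (rad d (Ks d) / (sqrt (real d) * iso_const d (Ks d)) < 2 \<and> 1 \<le> d)" for d
  proof (intro allI impI)
    fix \<epsilon> assume eps: "\<epsilon> \<le> \<epsilon>0"
    have d: "1 \<le> d" using hd by simp
    have bd: "convex_body d (Ks d)" "isotropic d (Ks d)" using bodies d by auto
    have Lp: "iso_const d (Ks d) > 0" using iso_const_prop[OF d bd(2)] by simp
    have sp: "sqrt (real d) * iso_const d (Ks d) > 0" using d Lp by simp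
    have radb: "rad d (Ks d) < 2 * sqrt (real d) * iso_const d (Ks d)"
      using hd sp by (simp add: divide_less_eq mult.assoc)
    have "(1 + \<gamma>) ^ d = exp (real d / (1024 * b\<^sup>2))"
      by (simp add: \<gamma>_def exp_of_nat_mult[symmetric])
    moreover have "ereal (3/64 * exp (real d / (1024 * b\<^sup>2))) \<le> info_complexity d (Ks d) (C1_class d (A d) (B d) (Ks d)) \<epsilon>"
      by (rule main_d[OF d bd radb b psi[THEN spec[where x=d]]]) (use hd a eps in \<open>auto simp: \<epsilon>0_def\<close>)
    ultimately show "ereal (3/64 * (1 + \<gamma>) ^ d) \<le> info_complexity d (Ks d) (C1_class d (A d) (B d) (Ks d)) \<epsilon>"
      by simp
  qed
  have "frequently (\<lambda>d. a < g d \<and>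
            (rad d (Ks d) / (sqrt (real d) * iso_const d (Ks d)) < 2 \<and> 1 \<le> d)) sequentially"
    by (rule frequently_eventually_frequently[OF freq ev])
  hence "frequently (\<lambda>d. \<forall>\<epsilon>. \<epsilon> \<le> \<epsilon>0 \<longrightarrow> ereal (3/64 * (1 + \<gamma>) ^ d) \<le> info_complexity d (Ks d) (C1_class d (A d) (B d) (Ks d)) \<epsilon>) sequentially"
    by (rule frequently_elim1) (rule key, simp add: g_def)
  hence "\<exists>\<^sub>\<infinity> d. \<forall>\<epsilon>. \<epsilon> \<le> \<epsilon>0 \<longrightarrow> info_complexity d (Ks d) (C1_class d (A d) (B d) (Ks d)) \<epsilon> \<ge> ereal (3/64 * (1 + \<gamma>) ^ d)"
    by (simp add: cofinite_eq_sequentially)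
  thus ?thesis unfolding curse_def using e0 g0
    by (intro exI[of _ "3/64"] exI[of _ \<epsilon>0] exI[of _ \<gamma>]) auto
qed

end
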